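(* Let $\rho\in\mathbb R$, let $\mathbf a=\{a_n\}_{n\ge1}$ be a sequence of non-negative real numbers, and let $\kappa_{\mathbf a}(s,u)=\sum_{n\ge1}a_nn^{-s-\bar u}$ be the diagonal Dirichlet series kernel on $\mathbb H_\rho\times\mathbb H_\rho$ with reproducing kernel Hilbert space $\mathscr H_{\mathbf a}$. Let $\mathbf b=\{b_n\}$ be an admissible sequence of real numbers with $\mathrm{supp}(\mathbf b)=\mathrm{supp}(\mathbf a)$, and for $\beta\in\mathbb R$ let $f_\beta(s)=\sum_{n\in\mathrm{supp}(\mathbf b)}n^{i\beta}b_nn^{-s}$, $s\in\mathbb H_\rho$ (convergent on $\mathbb H_\rho$). Assume $\{f_\beta:\beta\in\mathbb R\}$ is a total subset of $\mathscr H_{\mathbf a}$. Let $T$ be the linear operator with domain $\mathcal D(T)=\mathrm{span}\{f_\beta:\beta\in\mathbb R\}$ defined by $Tf_\beta=i\beta f_\beta$, extended linearly. Then $T$ is a $\mathscr T$-homogeneous operator in $\mathscr H_{\mathbf a}$. If, in addition, there exists $\delta>0$ with $\sum_{n\in\mathrm{supp}(\mathbf a)}n^{2\delta}b_n^2/a_n<\infty$, then the domain $\mathcal D(T^* )$ of the Hilbert space adjoint of $T$ is $\{0\}$.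
   Context: $\mathbb H_\rho=\{\Re s>\rho\}$. $\mathscr H_{\mathbf a}$ is the Hilbert space of functions on $\mathbb H_\rho$ with $\kappa_{\mathbf a}(\cdot,t)\in\mathscr H_{\mathbf a}$ and $\langle f,\kappa_{\mathbf a}(\cdot,t)\rangle=f(t)$. A real sequence $\mathbf b$ is admissible if $\mathrm{supp}(\mathbf b)=\{n:b_n\ne0\}$ is an infinite subset of $\mathbb N$ closed under multiplication and contains $p,q\ne1$ with $\gcd(p,q)=1$. A densely defined linear operator $T$ in a complex Hilbert space $\mathcal H$ is $\mathscr T$-homogeneous if for every $c\in\mathbb R$ there is a unitary $U_c$ on $\mathcal H$ with $U_c\mathcal D(T)\subseteq\mathcal D(T)$ and $U_cTf=(T-icI)U_cf$ for all $f\in\mathcal D(T)$. *)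

theory Defs
  imports "HOL-Analysis.Analysis"
begin

definition halfplane :: "real \<Rightarrow> complex set" where
  "halfplane \<rho> = {s. Re s > \<rho>}"

definition supp :: "(nat \<Rightarrow> real) \<Rightarrow> nat set" where
  "supp b = {n. n \<ge> 1 \<and> b n \<noteq> 0}"

definition admissible :: "(nat \<Rightarrow> real) \<Rightarrow> bool" where
  "admissible b \<longleftrightarrow> infinite (supp b)
     \<and> (\<forall>m\<in>supp b. \<forall>n\<in>supp b. m * n \<in> supp b)
     \<and> (\<exists>p\<in>supp b. \<exists>q\<in>supp b. p \<noteq> 1 \<and> q \<noteq> 1 \<and> coprime p q)"

definition dkernel :: "(nat \<Rightarrow> real) \<Rightarrow> real \<Rightarrow> complex \<Rightarrow> complex \<Rightarrow> complex" where
  "dkernel a \<rho> s u = (if s \<in> halfplane \<rho>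
     then (\<Sum>n. complex_of_real (a (Suc n)) * of_nat (Suc n) powr (- s - cnj u)) else 0)"

text \<open>f_beta(s) = sum_{n in supp b} n^(i beta) b_n n^(-s), on H_rho (0 outside).
  Terms with n outside supp b vanish, so summing over all n >= 1 is the same.\<close>
definition fbeta :: "(nat \<Rightarrow> real) \<Rightarrow> real \<Rightarrow> real \<Rightarrow> complex \<Rightarrow> complex" where
  "fbeta b \<rho> \<beta> s = (if s \<in> halfplane \<rho>
     then (\<Sum>n. of_nat (Suc n) powr (\<i> * of_real \<beta>) * complex_of_real (b (Suc n))
                 * of_nat (Suc n) powr (- s)) else 0)"

definition hnorm :: "((complex \<Rightarrow> complex) \<Rightarrow> (complex \<Rightarrow> complex) \<Rightarrow> complex)
     \<Rightarrow> (complex \<Rightarrow> complex) \<Rightarrow> real" where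
  "hnorm ip x = sqrt (Re (ip x x))"

definition chilbert :: "(complex \<Rightarrow> complex) set
     \<Rightarrow> ((complex \<Rightarrow> complex) \<Rightarrow> (complex \<Rightarrow> complex) \<Rightarrow> complex) \<Rightarrow> bool" where
  "chilbert H ip \<longleftrightarrow>
     (\<lambda>_. 0) \<in> H
   \<and> (\<forall>x\<in>H. \<forall>y\<in>H. (\<lambda>s. x s + y s) \<in> H)
   \<and> (\<forall>c. \<forall>x\<in>H. (\<lambda>s. c * x s) \<in> H)
   \<and> (\<forall>x\<in>H. \<forall>y\<in>H. \<forall>z\<in>H. ip (\<lambda>s. x s + y s) z = ip x z + ip y z)
   \<and> (\<forall>c. \<forall>x\<in>H. \<forall>z\<in>H. ip (\<lambda>s. c * x s) z = c * ip x z)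
   \<and> (\<forall>x\<in>H. \<forall>y\<in>H. ip y x = cnj (ip x y))
   \<and> (\<forall>x\<in>H. Im (ip x x) = 0 \<and> Re (ip x x) \<ge> 0)
   \<and> (\<forall>x\<in>H. ip x x = 0 \<longrightarrow> x = (\<lambda>_. 0))
   \<and> (\<forall>X. (\<forall>n. X n \<in> H) \<and> (\<forall>e>0. \<exists>N. \<forall>m\<ge>N. \<forall>n\<ge>N. hnorm ip (\<lambda>s. X m s - X n s) < e)
          \<longrightarrow> (\<exists>L\<in>H. (\<lambda>n. hnorm ip (\<lambda>s. X n s - L s)) \<longlonglongrightarrow> 0))"

text \<open>(H, ip) is the reproducing kernel Hilbert space of the kernel K on the
  half-plane H_rho: functions on H_rho (encoded as vanishing outside H_rho),
  K(.,t) in H and <f, K(.,t)> = f(t) for t in H_rho.  Such a space is unique.\<close>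
definition is_rkhs :: "(complex \<Rightarrow> complex) set
     \<Rightarrow> ((complex \<Rightarrow> complex) \<Rightarrow> (complex \<Rightarrow> complex) \<Rightarrow> complex)
     \<Rightarrow> real \<Rightarrow> (complex \<Rightarrow> complex \<Rightarrow> complex) \<Rightarrow> bool" where
  "is_rkhs H ip \<rho> K \<longleftrightarrow> chilbert H ip
   \<and> (\<forall>f\<in>H. \<forall>s. s \<notin> halfplane \<rho> \<longrightarrow> f s = 0)
   \<and> (\<forall>t\<in>halfplane \<rho>. (\<lambda>s. K s t) \<in> H \<and> (\<forall>f\<in>H. ip f (\<lambda>s. K s t) = f t))"

definition cspan :: "(complex \<Rightarrow> complex) set \<Rightarrow> (complex \<Rightarrow> complex) set" where
  "cspan S = {g. \<exists>F c. finite F \<and> F \<subseteq> S \<and> g = (\<lambda>s. \<Sum>h\<in>F. c h * h s)}"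

definition total_in :: "(complex \<Rightarrow> complex) set
     \<Rightarrow> ((complex \<Rightarrow> complex) \<Rightarrow> (complex \<Rightarrow> complex) \<Rightarrow> complex)
     \<Rightarrow> (complex \<Rightarrow> complex) set \<Rightarrow> bool" where
  "total_in H ip S \<longleftrightarrow> S \<subseteq> H
     \<and> (\<forall>x\<in>H. \<forall>e>0. \<exists>g\<in>cspan S. hnorm ip (\<lambda>s. x s - g s) < e)"

definition linear_on :: "(complex \<Rightarrow> complex) set
     \<Rightarrow> ((complex \<Rightarrow> complex) \<Rightarrow> (complex \<Rightarrow> complex)) \<Rightarrow> bool" where
  "linear_on D T \<longleftrightarrow> (\<forall>x\<in>D. \<forall>y\<in>D. T (\<lambda>s. x s + y s) = (\<lambda>s. T x s + T y s))
     \<and> (\<forall>c. \<forall>x\<in>D. T (\<lambda>s. c * x s) = (\<lambda>s. c * T x s))"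

definition unitary_on :: "(complex \<Rightarrow> complex) set
     \<Rightarrow> ((complex \<Rightarrow> complex) \<Rightarrow> (complex \<Rightarrow> complex) \<Rightarrow> complex)
     \<Rightarrow> ((complex \<Rightarrow> complex) \<Rightarrow> (complex \<Rightarrow> complex)) \<Rightarrow> bool" where
  "unitary_on H ip U \<longleftrightarrow> linear_on H U \<and> bij_betw U H H
     \<and> (\<forall>x\<in>H. \<forall>y\<in>H. ip (U x) (U y) = ip x y)"

definition T_homogeneous :: "(complex \<Rightarrow> complex) set
     \<Rightarrow> ((complex \<Rightarrow> complex) \<Rightarrow> (complex \<Rightarrow> complex) \<Rightarrow> complex)
     \<Rightarrow> (complex \<Rightarrow> complex) set
     \<Rightarrow> ((complex \<Rightarrow> complex) \<Rightarrow> (complex \<Rightarrow> complex)) \<Rightarrow> bool" where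
  "T_homogeneous H ip D T \<longleftrightarrow>
     (\<forall>c::real. \<exists>U. unitary_on H ip U \<and> U ` D \<subseteq> D
        \<and> (\<forall>f\<in>D. U (T f) = (\<lambda>s. T (U f) s - \<i> * of_real c * U f s)))"

definition adj_domain :: "(complex \<Rightarrow> complex) set
     \<Rightarrow> ((complex \<Rightarrow> complex) \<Rightarrow> (complex \<Rightarrow> complex) \<Rightarrow> complex)
     \<Rightarrow> (complex \<Rightarrow> complex) set
     \<Rightarrow> ((complex \<Rightarrow> complex) \<Rightarrow> (complex \<Rightarrow> complex)) \<Rightarrow> (complex \<Rightarrow> complex) set" where
  "adj_domain H ip D T = {g\<in>H. \<exists>h\<in>H. \<forall>f\<in>D. ip (T f) g = ip f h}"

end

theory Submission
  imports Defs
begin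


lemma cs_alg:
  fixes p t a :: complex and r :: real
  assumes rpos: "r > 0" and t_def: "t = p / of_real r"
  shows "(a - cnj t * p) - t * (cnj p - cnj t * of_real r) = a - p * cnj p / of_real r"
proof -
  have ct: "cnj t = cnj p / of_real r" by (simp add: t_def)
  have rnz: "(of_real r :: complex) \<noteq> 0" using rpos by simp
  have e0: "(a - cnj t * p) - t * (cnj p - cnj t * of_real r)
        = a - cnj t * p - t * cnj p + t * cnj t * of_real r"
    by (simp add: algebra_simps)
  have e1: "t * cnj t * of_real r = p * cnj p / of_real r"
    unfolding ct t_def using rnz by simp
  have e2: "cnj t * p = p * cnj p / of_real r" unfolding ct by simp
  have e3: "t * cnj p = p * cnj p / of_real r" by (simp add: t_def)
  have "a - cnj t * p - t * cnj p + t * cnj t * of_real r = a - p * cnj p / of_real r - p * cnj p / of_real r + p * cnj p / of_real r"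
    by (simp only: e1 e2 e3)
  thus ?thesis using e0 by simp
qed

lemma orth_alg:
  fixes Y z t :: complex and N e :: real
  assumes h: "Re (Y - cnj t * z - t * cnj z + t * cnj t * of_real N) \<ge> Re Y"
    and t: "t = of_real e * z" and e: "e > 0" and eN: "e * N < 1"
  shows "z = 0"
proof -
  define w where "w = (cmod z)^2"
  have zz: "z * cnj z = of_real w" unfolding w_def by (rule complex_norm_square[symmetric])
  have a1: "cnj t * z = of_real (e * w)" using zz by (simp add: t mult.commute mult.left_commute)
  have a2: "t * cnj z = of_real (e * w)" using zz by (simp add: t mult.commute mult.left_commute)
  have a3: "t * cnj t * of_real N = of_real (e * e * w * N)"
    using zz by (simp add: t mult.commute mult.left_commute)
  have "Re (Y - cnj t * z - t * cnj z + t * cnj t * of_real N) = Re Y - 2 * e * w + e * e * w * N"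
    unfolding a1 a2 a3 by simp
  hence "e * w * (e * N - 2) \<ge> 0" using h by (simp add: algebra_simps)
  moreover have "e * N - 2 < 0" using eN by simp
  ultimately have "e * w \<le> 0" by (auto simp: zero_le_mult_iff)
  hence "w \<le> 0" using e by (simp add: mult_le_0_iff)
  hence "cmod z = 0" unfolding w_def by simp
  thus ?thesis by simp
qed

locale hs =
  fixes H :: "(complex \<Rightarrow> complex) set"
    and ip :: "(complex \<Rightarrow> complex) \<Rightarrow> (complex \<Rightarrow> complex) \<Rightarrow> complex"
  assumes ch: "chilbert H ip"
begin

abbreviation nrm where "nrm \<equiv> hnorm ip"

definition conv :: "(nat \<Rightarrow> complex \<Rightarrow> complex) \<Rightarrow> (complex \<Rightarrow> complex) \<Rightarrow> bool" where
  "conv X x \<longleftrightarrow> (\<lambda>n. nrm (\<lambda>s. X n s - x s)) \<longlonglongrightarrow> 0"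

lemma zero_in: "(\<lambda>_. 0) \<in> H" using ch unfolding chilbert_def by blast
lemma add_in: "x \<in> H \<Longrightarrow> y \<in> H \<Longrightarrow> (\<lambda>s. x s + y s) \<in> H"
  using ch unfolding chilbert_def by blast
lemma scale_in: "x \<in> H \<Longrightarrow> (\<lambda>s. c * x s) \<in> H"
  using ch unfolding chilbert_def by blast
lemma diff_in: "x \<in> H \<Longrightarrow> y \<in> H \<Longrightarrow> (\<lambda>s. x s - y s) \<in> H"
proof -
  assume "x \<in> H" "y \<in> H"
  hence "(\<lambda>s. x s + (\<lambda>s. (-1) * y s) s) \<in> H" using add_in scale_in by blast
  thus ?thesis by simp
qed
lemma ip_add_l: "x \<in> H \<Longrightarrow> y \<in> H \<Longrightarrow> z \<in> H \<Longrightarrow> ip (\<lambda>s. x s + y s) z = ip x z + ip y z"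
  using ch unfolding chilbert_def by blast
lemma ip_scale_l: "x \<in> H \<Longrightarrow> z \<in> H \<Longrightarrow> ip (\<lambda>s. c * x s) z = c * ip x z"
  using ch unfolding chilbert_def by blast
lemma ip_sym: "x \<in> H \<Longrightarrow> y \<in> H \<Longrightarrow> ip y x = cnj (ip x y)"
  using ch unfolding chilbert_def by blast
lemma ip_self_re: "x \<in> H \<Longrightarrow> Im (ip x x) = 0 \<and> Re (ip x x) \<ge> 0"
  using ch unfolding chilbert_def by blast
lemma ip_self_zero: "x \<in> H \<Longrightarrow> ip x x = 0 \<Longrightarrow> x = (\<lambda>_. 0)"
  using ch unfolding chilbert_def by blast
lemma complete: "(\<forall>n. X n \<in> H) \<Longrightarrow> (\<forall>e>0. \<exists>N. \<forall>m\<ge>N. \<forall>n\<ge>N. nrm (\<lambda>s. X m s - X n s) < e)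
          \<Longrightarrow> \<exists>L\<in>H. conv X L"
  using ch unfolding chilbert_def conv_def by blast

lemma ip_add_r: "x \<in> H \<Longrightarrow> y \<in> H \<Longrightarrow> z \<in> H \<Longrightarrow> ip z (\<lambda>s. x s + y s) = ip z x + ip z y"
proof -
  assume h: "x \<in> H" "y \<in> H" "z \<in> H"
  have "ip z (\<lambda>s. x s + y s) = cnj (ip (\<lambda>s. x s + y s) z)" using h add_in ip_sym by blast
  also have "\<dots> = cnj (ip x z) + cnj (ip y z)" using h ip_add_l by simp
  also have "\<dots> = ip z x + ip z y" using ip_sym[of z x] ip_sym[of z y] h by simp
  finally show ?thesis .
qed
lemma ip_scale_r: "x \<in> H \<Longrightarrow> z \<in> H \<Longrightarrow> ip z (\<lambda>s. c * x s) = cnj c * ip z x"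
proof -
  assume h: "x \<in> H" "z \<in> H"
  have "ip z (\<lambda>s. c * x s) = cnj (ip (\<lambda>s. c * x s) z)" using h scale_in ip_sym by blast
  also have "\<dots> = cnj c * cnj (ip x z)" using h ip_scale_l by simp
  also have "\<dots> = cnj c * ip z x" using h ip_sym[of z x] by simp
  finally show ?thesis .
qed
lemma ip_diff_l: "x \<in> H \<Longrightarrow> y \<in> H \<Longrightarrow> z \<in> H \<Longrightarrow> ip (\<lambda>s. x s - y s) z = ip x z - ip y z"
proof -
  assume h: "x \<in> H" "y \<in> H" "z \<in> H"
  have "ip (\<lambda>s. x s + (\<lambda>s. (-1) * y s) s) z = ip x z + ip (\<lambda>s. (-1) * y s) z"
    using h by (intro ip_add_l scale_in)
  also have "\<dots> = ip x z - ip y z" using h ip_scale_l[of y z "-1"] by simp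
  finally show ?thesis by simp
qed
lemma ip_diff_r: "x \<in> H \<Longrightarrow> y \<in> H \<Longrightarrow> z \<in> H \<Longrightarrow> ip z (\<lambda>s. x s - y s) = ip z x - ip z y"
proof -
  assume h: "x \<in> H" "y \<in> H" "z \<in> H"
  have "ip z (\<lambda>s. x s - y s) = cnj (ip (\<lambda>s. x s - y s) z)" using h diff_in ip_sym by blast
  also have "\<dots> = cnj (ip x z) - cnj (ip y z)" using h ip_diff_l by simp
  also have "\<dots> = ip z x - ip z y" using ip_sym[of z x] ip_sym[of z y] h by simp
  finally show ?thesis .
qed
lemma ip_zero_l: "z \<in> H \<Longrightarrow> ip (\<lambda>_. 0) z = 0"
proof -
  assume z: "z \<in> H"
  have "ip (\<lambda>s. 0 * (\<lambda>_. 0) s) z = 0 * ip (\<lambda>_. 0) z" using z zero_in by (intro ip_scale_l)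
  thus ?thesis by simp
qed
lemma ip_zero_r: "z \<in> H \<Longrightarrow> ip z (\<lambda>_. 0) = 0"
proof -
  assume z: "z \<in> H"
  have "ip z (\<lambda>_. 0) = cnj (ip (\<lambda>_. 0) z)" using ip_sym[OF zero_in z] .
  thus ?thesis using ip_zero_l[OF z] by simp
qed

lemma nrm_nonneg: "x \<in> H \<Longrightarrow> nrm x \<ge> 0" using ip_self_re by (simp add: hnorm_def)
lemma nrm_sq: assumes "x \<in> H" shows "(nrm x)^2 = Re (ip x x)"
proof -
  have "0 \<le> Re (ip x x)" using ip_self_re[OF assms] by blast
  thus ?thesis by (simp add: hnorm_def)
qed
lemma ip_self: "x \<in> H \<Longrightarrow> ip x x = of_real ((nrm x)^2)"
  using ip_self_re nrm_sq by (simp add: complex_eq_iff)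

lemma cs: assumes x: "x \<in> H" and y: "y \<in> H" shows "cmod (ip x y) \<le> nrm x * nrm y"
proof (cases "ip y y = 0")
  case True
  hence "y = (\<lambda>_. 0)" using ip_self_zero y by blast
  thus ?thesis using ip_zero_r x nrm_nonneg[OF x] nrm_nonneg[OF y] by simp
next
  case False
  define r where "r = (nrm y)^2"
  have yy: "ip y y = of_real r" using ip_self y r_def by simp
  have r0: "r \<noteq> 0" using False yy by simp
  have "r \<ge> 0" unfolding r_def by simp
  hence rpos: "r > 0" using r0 by simp
  define p where "p = ip x y"
  define t where "t = p / of_real r"
  have yx: "ip y x = cnj p" using ip_sym[OF x y] p_def by simp
  have zin: "(\<lambda>s. t * y s) \<in> H" using y scale_in by blast
  have e1: "ip (\<lambda>s. x s - t * y s) (\<lambda>s. x s - t * y s)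
      = ip x (\<lambda>s. x s - t * y s) - ip (\<lambda>s. t * y s) (\<lambda>s. x s - t * y s)"
    using ip_diff_l[OF x zin diff_in[OF x zin]] by simp
  have e2: "ip x (\<lambda>s. x s - t * y s) = ip x x - cnj t * ip x y"
    using ip_diff_r[OF x zin x] ip_scale_r[OF y x] by simp
  have e3: "ip (\<lambda>s. t * y s) (\<lambda>s. x s - t * y s) = t * (ip y x - cnj t * ip y y)"
    using ip_scale_l[OF y diff_in[OF x zin]] ip_diff_r[OF x zin y] ip_scale_r[OF y y] by simp
  have e4: "(ip x x - cnj t * ip x y) - t * (ip y x - cnj t * ip y y) = ip x x - p * cnj p / of_real r"
    unfolding yy yx p_def[symmetric] by (rule cs_alg[OF rpos t_def])
  have e5: "p * cnj p = of_real ((cmod p)^2)" using complex_norm_square[of p] by simp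
  have e: "ip (\<lambda>s. x s - t * y s) (\<lambda>s. x s - t * y s) = ip x x - of_real ((cmod p)^2 / r)"
    using e1 e2 e3 e4 e5 by simp
  have "Re (ip (\<lambda>s. x s - t * y s) (\<lambda>s. x s - t * y s)) \<ge> 0"
    using ip_self_re diff_in[OF x zin] by simp
  hence "(cmod p)^2 / r \<le> (nrm x)^2" using e nrm_sq[OF x] by simp
  hence "(cmod p)^2 \<le> (nrm x)^2 * (nrm y)^2" using rpos r_def by (simp add: field_simps)
  hence "(cmod p)^2 \<le> (nrm x * nrm y)^2" by (simp add: power_mult_distrib)
  from power2_le_imp_le[OF this mult_nonneg_nonneg[OF nrm_nonneg[OF x] nrm_nonneg[OF y]]]
  show ?thesis using p_def by simp
qed

lemma nrm_add: assumes x: "x \<in> H" and y: "y \<in> H" shows "nrm (\<lambda>s. x s + y s) \<le> nrm x + nrm y"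
proof -
  have "ip (\<lambda>s. x s + y s) (\<lambda>s. x s + y s) = ip x x + ip x y + (ip y x + ip y y)"
    using x y by (simp add: ip_add_l ip_add_r add_in)
  hence "(nrm (\<lambda>s. x s + y s))^2 = (nrm x)^2 + (nrm y)^2 + 2 * Re (ip x y)"
    using nrm_sq x y add_in ip_sym[OF x y] by simp
  also have "\<dots> \<le> (nrm x)^2 + (nrm y)^2 + 2 * (nrm x * nrm y)"
    using cs[OF x y] complex_Re_le_cmod[of "ip x y"] by linarith
  also have "\<dots> = (nrm x + nrm y)^2" by (simp add: power2_eq_square algebra_simps)
  finally show ?thesis using power2_le_imp_le add_nonneg_nonneg[OF nrm_nonneg[OF x] nrm_nonneg[OF y]] by blast
qed

lemma nrm_scale: assumes x: "x \<in> H" shows "nrm (\<lambda>s. c * x s) = cmod c * nrm x"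
proof -
  have "(nrm (\<lambda>s. c * x s))^2 = Re (c * cnj c * ip x x)"
    using nrm_sq scale_in x by (simp add: ip_scale_l ip_scale_r mult.assoc)
  also have "\<dots> = (cmod c * nrm x)^2"
  proof -
    have A: "c * cnj c = of_real ((cmod c)^2)" by (rule complex_norm_square[symmetric])
    have B: "ip x x = of_real ((nrm x)^2)" by (rule ip_self[OF x])
    have "c * cnj c * ip x x = of_real ((cmod c)^2 * (nrm x)^2)" unfolding A B of_real_mult by (rule refl)
    hence "Re (c * cnj c * ip x x) = (cmod c)^2 * (nrm x)^2" by (simp only: Re_complex_of_real)
    thus ?thesis by (simp only: power_mult_distrib)
  qed
  finally have eq: "(nrm (\<lambda>s. c * x s))^2 = (cmod c * nrm x)^2" .
  have n0: "0 \<le> nrm (\<lambda>s. c * x s)" using nrm_nonneg[OF scale_in[OF x]] .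
  have n1: "0 \<le> cmod c * nrm x" using mult_nonneg_nonneg[OF norm_ge_zero nrm_nonneg[OF x]] .
  show ?thesis using power2_eq_iff_nonneg[OF n0 n1] eq by blast
qed

lemma nrm_swap: "x \<in> H \<Longrightarrow> y \<in> H \<Longrightarrow> nrm (\<lambda>s. x s - y s) = nrm (\<lambda>s. y s - x s)"
proof -
  assume h: "x \<in> H" "y \<in> H"
  have "nrm (\<lambda>s. (-1) * (\<lambda>s. x s - y s) s) = cmod (-1) * nrm (\<lambda>s. x s - y s)"
    using nrm_scale[OF diff_in[OF h]] by blast
  moreover have "(\<lambda>s. (-1) * (\<lambda>s. x s - y s) s) = (\<lambda>s. y s - x s)" by (simp add: fun_eq_iff)
  ultimately show ?thesis by simp
qed

lemma nrm_tri: assumes "x \<in> H" "y \<in> H" "z \<in> H"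
  shows "nrm (\<lambda>s. x s - z s) \<le> nrm (\<lambda>s. x s - y s) + nrm (\<lambda>s. y s - z s)"
proof -
  have "nrm (\<lambda>s. (\<lambda>s. x s - y s) s + (\<lambda>s. y s - z s) s) \<le> nrm (\<lambda>s. x s - y s) + nrm (\<lambda>s. y s - z s)"
    using assms by (intro nrm_add diff_in)
  thus ?thesis by simp
qed

lemma nrm_zero_iff: "x \<in> H \<Longrightarrow> nrm x = 0 \<longleftrightarrow> x = (\<lambda>_. 0)"
proof -
  assume x: "x \<in> H"
  show ?thesis
  proof
    assume "nrm x = 0"
    hence "ip x x = 0" using ip_self[OF x] by simp
    thus "x = (\<lambda>_. 0)" using ip_self_zero x by blast
  next
    assume "x = (\<lambda>_. 0)"
    hence "ip x x = 0" using ip_zero_l zero_in by simp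
    thus "nrm x = 0" by (simp add: hnorm_def)
  qed
qed


lemma conv_ip:
  assumes XH: "\<forall>n. X n \<in> H" and YH: "\<forall>n. Y n \<in> H" and x: "x \<in> H" and y: "y \<in> H"
    and cx: "conv X x" and cy: "conv Y y"
  shows "(\<lambda>n. ip (X n) (Y n)) \<longlonglongrightarrow> ip x y"
proof -
  define d where "d n = nrm (\<lambda>s. X n s - x s)" for n
  define e where "e n = nrm (\<lambda>s. Y n s - y s)" for n
  have d0: "d \<longlonglongrightarrow> 0" using cx unfolding conv_def d_def by simp
  have e0: "e \<longlonglongrightarrow> 0" using cy unfolding conv_def e_def by simp
  have bnd: "norm (ip (X n) (Y n) - ip x y) \<le> d n * (e n + nrm y) + nrm x * e n" for n
  proof -
    have Xn: "X n \<in> H" and Yn: "Y n \<in> H" using XH YH by auto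
    have eq: "ip (X n) (Y n) - ip x y = ip (\<lambda>s. X n s - x s) (Y n) + ip x (\<lambda>s. Y n s - y s)"
      using ip_diff_l[OF Xn x Yn] ip_diff_r[OF Yn y x] by simp
    have "norm (ip (\<lambda>s. X n s - x s) (Y n)) \<le> d n * nrm (Y n)"
      unfolding d_def by (rule cs[OF diff_in[OF Xn x] Yn])
    also have "nrm (Y n) \<le> e n + nrm y"
    proof -
      have "nrm (\<lambda>s. Y n s - 0) \<le> nrm (\<lambda>s. Y n s - y s) + nrm (\<lambda>s. y s - 0)"
        using nrm_tri[OF Yn y zero_in] by simp
      thus ?thesis unfolding e_def by simp
    qed
    hence "d n * nrm (Y n) \<le> d n * (e n + nrm y)"
      using nrm_nonneg[OF diff_in[OF Xn x]] unfolding d_def by (simp add: mult_left_mono)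
    finally have A: "norm (ip (\<lambda>s. X n s - x s) (Y n)) \<le> d n * (e n + nrm y)" .
    have B: "norm (ip x (\<lambda>s. Y n s - y s)) \<le> nrm x * e n"
      unfolding e_def by (rule cs[OF x diff_in[OF Yn y]])
    show ?thesis unfolding eq using A B norm_triangle_ineq[of "ip (\<lambda>s. X n s - x s) (Y n)" "ip x (\<lambda>s. Y n s - y s)"]
      by linarith
  qed
  have "(\<lambda>n. d n * (e n + nrm y) + nrm x * e n) \<longlonglongrightarrow> 0 * (0 + nrm y) + nrm x * 0"
    by (intro tendsto_intros d0 e0)
  hence lim0: "(\<lambda>n. d n * (e n + nrm y) + nrm x * e n) \<longlonglongrightarrow> 0" by simp
  have "(\<lambda>n. ip (X n) (Y n) - ip x y) \<longlonglongrightarrow> 0"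
    by (rule Lim_null_comparison[OF _ lim0]) (simp add: bnd)
  thus ?thesis by (rule LIM_zero_cancel)
qed

lemma conv_cauchy:
  assumes XH: "\<forall>n. X n \<in> H" and x: "x \<in> H" and cx: "conv X x"
  shows "\<forall>e>0. \<exists>N. \<forall>m\<ge>N. \<forall>n\<ge>N. nrm (\<lambda>s. X m s - X n s) < e"
proof (intro allI impI)
  fix e :: real assume e: "e > 0"
  have "(\<lambda>n. nrm (\<lambda>s. X n s - x s)) \<longlonglongrightarrow> 0" using cx unfolding conv_def .
  hence "\<forall>\<^sub>F n in sequentially. nrm (\<lambda>s. X n s - x s) < e/2"
    using e by (intro order_tendstoD(2)) auto
  then obtain N where N: "\<And>n. n \<ge> N \<Longrightarrow> nrm (\<lambda>s. X n s - x s) < e/2"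
    unfolding eventually_sequentially by auto
  show "\<exists>N. \<forall>m\<ge>N. \<forall>n\<ge>N. nrm (\<lambda>s. X m s - X n s) < e"
  proof (intro exI allI impI)
    fix m n assume m: "m \<ge> N" and n: "n \<ge> N"
    have "nrm (\<lambda>s. X m s - X n s) \<le> nrm (\<lambda>s. X m s - x s) + nrm (\<lambda>s. x s - X n s)"
      using nrm_tri[of "X m" x "X n"] XH x by simp
    also have "nrm (\<lambda>s. x s - X n s) = nrm (\<lambda>s. X n s - x s)" using nrm_swap XH x by simp
    finally show "nrm (\<lambda>s. X m s - X n s) < e" using N[OF m] N[OF n] by linarith
  qed
qed

lemma conv_unique:
  assumes XH: "\<forall>n. X n \<in> H" and p: "p \<in> H" and q: "q \<in> H" and cp: "conv X p" and cq: "conv X q"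
  shows "p = q"
proof -
  have "(\<lambda>n. nrm (\<lambda>s. X n s - p s) + nrm (\<lambda>s. X n s - q s)) \<longlonglongrightarrow> 0 + 0"
    using cp cq unfolding conv_def by (intro tendsto_intros)
  moreover have "nrm (\<lambda>s. p s - q s) \<le> nrm (\<lambda>s. X n s - p s) + nrm (\<lambda>s. X n s - q s)" for n
  proof -
    have "nrm (\<lambda>s. p s - q s) \<le> nrm (\<lambda>s. p s - X n s) + nrm (\<lambda>s. X n s - q s)"
      using nrm_tri[of p "X n" q] XH p q by simp
    thus ?thesis using nrm_swap[of p "X n"] XH p by simp
  qed
  ultimately have "nrm (\<lambda>s. p s - q s) \<le> 0 + 0"
    using LIMSEQ_le_const by blast
  hence "nrm (\<lambda>s. p s - q s) = 0" using nrm_nonneg[OF diff_in[OF p q]] by simp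
  hence "(\<lambda>s. p s - q s) = (\<lambda>_. 0)" using nrm_zero_iff diff_in[OF p q] by blast
  thus ?thesis by (simp add: fun_eq_iff)
qed

lemma parallelogram:
  assumes A: "A \<in> H" and B: "B \<in> H"
  shows "ip (\<lambda>s. A s + B s) (\<lambda>s. A s + B s) + ip (\<lambda>s. A s - B s) (\<lambda>s. A s - B s)
         = 2 * ip A A + 2 * ip B B"
proof -
  have "ip (\<lambda>s. A s + B s) (\<lambda>s. A s + B s) = ip A A + ip A B + (ip B A + ip B B)"
    using ip_add_l[OF A B add_in[OF A B]] ip_add_r[OF A B A] ip_add_r[OF A B B] by simp
  moreover have "ip (\<lambda>s. A s - B s) (\<lambda>s. A s - B s) = ip A A - ip A B - (ip B A - ip B B)"
    using ip_diff_l[OF A B diff_in[OF A B]] ip_diff_r[OF A B A] ip_diff_r[OF A B B] by simp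
  ultimately show ?thesis by simp
qed

lemma density:
  assumes VH: "V \<subseteq> H" and V0: "(\<lambda>_. 0) \<in> V"
    and Vadd: "\<forall>v\<in>V. \<forall>w\<in>V. (\<lambda>s. v s + w s) \<in> V"
    and Vscale: "\<forall>c. \<forall>v\<in>V. (\<lambda>s. c * v s) \<in> V"
    and orth: "\<forall>y\<in>H. (\<forall>v\<in>V. ip y v = 0) \<longrightarrow> y = (\<lambda>_. 0)"
    and x: "x \<in> H"
  shows "\<exists>X. (\<forall>n. X n \<in> V) \<and> conv X x"
proof -
  define q where "q v = Re (ip (\<lambda>s. x s - v s) (\<lambda>s. x s - v s))" for v
  have qn: "q v = (nrm (\<lambda>s. x s - v s))^2" if "v \<in> H" for v
    unfolding q_def using nrm_sq[OF diff_in[OF x that]] by simp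
  have q0: "q v \<ge> 0" if "v \<in> H" for v using qn[OF that] by simp
  define m where "m = Inf (q ` V)"
  have bdd: "bdd_below (q ` V)" unfolding bdd_below_def using q0 VH by blast
  have mle: "m \<le> q v" if "v \<in> V" for v unfolding m_def using bdd that by (simp add: cInf_lower)
  have ex: "\<exists>v\<in>V. q v < m + inverse (real (Suc n))" for n
  proof -
    have "q ` V \<noteq> {}" using V0 by blast
    moreover have "Inf (q ` V) < m + inverse (real (Suc n))" unfolding m_def by simp
    ultimately have "\<exists>r\<in>q ` V. r < m + inverse (real (Suc n))" by (rule cInf_lessD)
    thus ?thesis by blast
  qed
  hence "\<forall>n. \<exists>v. v \<in> V \<and> q v < m + inverse (real (Suc n))" by blast
  then obtain X where X: "\<forall>n. X n \<in> V \<and> q (X n) < m + inverse (real (Suc n))"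
    using choice[of "\<lambda>n v. v \<in> V \<and> q v < m + inverse (real (Suc n))"] by blast
  have XV: "\<And>n. X n \<in> V" and Xq: "\<And>n. q (X n) < m + inverse (real (Suc n))" using X by auto
  have XH: "\<And>n. X n \<in> H" using XV VH by blast
  have par: "(nrm (\<lambda>s. v s - w s))^2 \<le> 2 * q v + 2 * q w - 4 * m" if v: "v \<in> V" and w: "w \<in> V" for v w
  proof -
    have vH: "v \<in> H" and wH: "w \<in> H" using v w VH by auto
    define mid where "mid = (\<lambda>s. (1/2) * (v s + w s))"
    have vw: "(\<lambda>s. v s + w s) \<in> V" using Vadd v w by blast
    have midV: "mid \<in> V" unfolding mid_def using bspec[OF spec[OF Vscale, of "1/2"] vw] by simp
    have midH: "mid \<in> H" using midV VH by blast
    have AH: "(\<lambda>s. x s - v s) \<in> H" and BH: "(\<lambda>s. x s - w s) \<in> H" using diff_in x vH wH by auto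
    have P: "ip (\<lambda>s. (x s - v s) + (x s - w s)) (\<lambda>s. (x s - v s) + (x s - w s))
        + ip (\<lambda>s. (x s - v s) - (x s - w s)) (\<lambda>s. (x s - v s) - (x s - w s))
        = 2 * ip (\<lambda>s. x s - v s) (\<lambda>s. x s - v s) + 2 * ip (\<lambda>s. x s - w s) (\<lambda>s. x s - w s)"
      using parallelogram[OF AH BH] by simp
    define Z where "Z = (\<lambda>s. x s - mid s)"
    have e1: "(\<lambda>s. (x s - v s) + (x s - w s)) = (\<lambda>s. 2 * Z s)"
      unfolding Z_def mid_def by (simp add: fun_eq_iff algebra_simps)
    have MH: "Z \<in> H" unfolding Z_def using diff_in[OF x midH] .
    have e1': "ip (\<lambda>s. 2 * Z s) (\<lambda>s. 2 * Z s) = 4 * ip Z Z"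
    proof -
      have "ip (\<lambda>s. 2 * Z s) (\<lambda>s. 2 * Z s) = 2 * ip Z (\<lambda>s. 2 * Z s)" by (rule ip_scale_l[OF MH scale_in[OF MH]])
      also have "ip Z (\<lambda>s. 2 * Z s) = cnj 2 * ip Z Z" by (rule ip_scale_r[OF MH MH])
      finally show ?thesis by simp
    qed
    have e2: "(\<lambda>s. (x s - v s) - (x s - w s)) = (\<lambda>s. w s - v s)" by (simp add: fun_eq_iff)
    have hP: "Re (4 * ip Z Z) + Re (ip (\<lambda>s. w s - v s) (\<lambda>s. w s - v s))
        = 2 * q v + 2 * q w"
      using arg_cong[OF P, of Re] unfolding e1 e1' e2 q_def by simp
    have hq: "q mid = Re (ip Z Z)" unfolding q_def Z_def by simp
    have "4 * q mid + (nrm (\<lambda>s. w s - v s))^2 = 2 * q v + 2 * q w"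
      using hP hq nrm_sq[OF diff_in[OF wH vH]] by simp
    moreover have "nrm (\<lambda>s. w s - v s) = nrm (\<lambda>s. v s - w s)" using nrm_swap[OF wH vH] .
    ultimately have "4 * q mid + (nrm (\<lambda>s. v s - w s))^2 = 2 * q v + 2 * q w" by simp
    moreover have "m \<le> q mid" using mle[OF midV] .
    ultimately show ?thesis by linarith
  qed
  have cauchy: "\<forall>e>0. \<exists>N. \<forall>a\<ge>N. \<forall>b\<ge>N. nrm (\<lambda>s. X a s - X b s) < e"
  proof (intro allI impI)
    fix e :: real assume e: "e > 0"
    obtain N :: nat where N: "4 / e^2 < real N" using reals_Archimedean2 by blast
    show "\<exists>N. \<forall>a\<ge>N. \<forall>b\<ge>N. nrm (\<lambda>s. X a s - X b s) < e"
    proof (intro exI allI impI)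
      fix a b assume a: "a \<ge> N" and b: "b \<ge> N"
      have "(nrm (\<lambda>s. X a s - X b s))^2 \<le> 2 * q (X a) + 2 * q (X b) - 4 * m" using par XV by blast
      also have "\<dots> < 2 * inverse (real (Suc a)) + 2 * inverse (real (Suc b))"
        using Xq[of a] Xq[of b] by linarith
      also have "\<dots> \<le> 4 * inverse (real (Suc N))"
      proof -
        have "inverse (real (Suc a)) \<le> inverse (real (Suc N))" using a by (simp add: le_imp_inverse_le)
        moreover have "inverse (real (Suc b)) \<le> inverse (real (Suc N))" using b by (simp add: le_imp_inverse_le)
        ultimately show ?thesis by linarith
      qed
      also have "\<dots> < e^2"
      proof -
        have "4 < real N * e^2" using N e by (simp add: field_simps)
        moreover have "0 < e^2" using e by simp
        moreover have "e^2 * real (Suc N) = e^2 + real N * e^2" by (simp add: algebra_simps)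
        ultimately have "4 < e^2 * real (Suc N)" by linarith
        thus ?thesis using e by (simp add: field_simps)
      qed
      finally have "(nrm (\<lambda>s. X a s - X b s))^2 < e^2" .
      thus "nrm (\<lambda>s. X a s - X b s) < e" using e by (simp add: power_less_imp_less_base)
    qed
  qed
  obtain p where pH: "p \<in> H" and cp: "conv X p" using complete[OF _ cauchy] XH by blast
  have seq1: "conv (\<lambda>n s. x s - (X n s + t * v s)) (\<lambda>s. x s - p s - t * v s)" for t v
  proof -
    have "(\<lambda>s. (x s - (X n s + t * v s)) - (x s - p s - t * v s)) = (\<lambda>s. p s - X n s)" for n
      by (simp add: fun_eq_iff)
    moreover have "nrm (\<lambda>s. p s - X n s) = nrm (\<lambda>s. X n s - p s)" for n using nrm_swap pH XH by simp
    ultimately show ?thesis using cp unfolding conv_def by simp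
  qed
  have lim_q: "(\<lambda>n. Re (ip (\<lambda>s. x s - (X n s + t * v s)) (\<lambda>s. x s - (X n s + t * v s))))
        \<longlonglongrightarrow> Re (ip (\<lambda>s. x s - p s - t * v s) (\<lambda>s. x s - p s - t * v s))" if vH: "v \<in> H" for t v
  proof -
    have inH: "\<forall>n. (\<lambda>s. x s - (X n s + t * v s)) \<in> H"
      using diff_in[OF x add_in[OF XH scale_in[OF vH]]] by simp
    have inH2: "(\<lambda>s. x s - p s - t * v s) \<in> H"
      using diff_in[OF diff_in[OF x pH] scale_in[OF vH]] by simp
    show ?thesis by (intro tendsto_Re conv_ip inH inH2 seq1)
  qed
  have geq: "Re (ip (\<lambda>s. x s - p s - t * v s) (\<lambda>s. x s - p s - t * v s)) \<ge> m" if vV: "v \<in> V" for t v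
  proof -
    have vH: "v \<in> H" using vV VH by blast
    have "m \<le> Re (ip (\<lambda>s. x s - (X n s + t * v s)) (\<lambda>s. x s - (X n s + t * v s)))" for n
    proof -
      have tv: "(\<lambda>s. t * v s) \<in> V" using bspec[OF spec[OF Vscale, of t] vV] by simp
      have "(\<lambda>s. X n s + t * v s) \<in> V" using bspec[OF bspec[OF Vadd XV[of n]] tv] by simp
      from mle[OF this] show ?thesis unfolding q_def by simp
    qed
    thus ?thesis using LIMSEQ_le_const[OF lim_q[OF vH]] by blast
  qed
  have qXlim: "(\<lambda>n. q (X n)) \<longlonglongrightarrow> m"
  proof (rule tendsto_sandwich[of "\<lambda>n. m" _ _ "\<lambda>n. m + inverse (real (Suc n))"])
    show "\<forall>\<^sub>F n in sequentially. m \<le> q (X n)" using mle XV by (simp add: always_eventually)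
    show "\<forall>\<^sub>F n in sequentially. q (X n) \<le> m + inverse (real (Suc n))" by (intro always_eventually allI less_imp_le[OF Xq])
    show "(\<lambda>n. m) \<longlonglongrightarrow> m" by simp
    have "(\<lambda>n. m + inverse (real (Suc n))) \<longlonglongrightarrow> m + 0"
      by (intro tendsto_intros LIMSEQ_inverse_real_of_nat)
    thus "(\<lambda>n. m + inverse (real (Suc n))) \<longlonglongrightarrow> m" by simp
  qed
  have qXlim2: "(\<lambda>n. q (X n)) \<longlonglongrightarrow> q p"
  proof -
    have "(\<lambda>n. Re (ip (\<lambda>s. x s - (X n s + 0 * (\<lambda>_. 0) s)) (\<lambda>s. x s - (X n s + 0 * (\<lambda>_. 0) s))))
        \<longlonglongrightarrow> Re (ip (\<lambda>s. x s - p s - 0 * (\<lambda>_. 0) s) (\<lambda>s. x s - p s - 0 * (\<lambda>_. 0) s))"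
      by (rule lim_q[OF zero_in])
    thus ?thesis unfolding q_def by simp
  qed
  have qp: "q p = m" using LIMSEQ_unique[OF qXlim2 qXlim] .
  define y where "y = (\<lambda>s. x s - p s)"
  have yH: "y \<in> H" unfolding y_def using diff_in[OF x pH] .
  have yorth: "ip y v = 0" if vV: "v \<in> V" for v
  proof -
    have vH: "v \<in> H" using vV VH by blast
    define z where "z = ip y v"
    define N where "N = (nrm v)^2"
    define e where "e = 1 / (N + 1)"
    have N0: "N \<ge> 0" unfolding N_def by simp
    have e0: "e > 0" unfolding e_def using N0 by simp
    have eN: "e * N < 1" unfolding e_def using N0 by (simp add: field_simps)
    define t where "t = of_real e * z"
    have tvH: "(\<lambda>s. t * v s) \<in> H" using scale_in[OF vH] .
    have exp: "ip (\<lambda>s. y s - t * v s) (\<lambda>s. y s - t * v s)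
        = ip y y - cnj t * z - t * cnj z + t * cnj t * of_real N"
    proof -
      have "ip (\<lambda>s. y s - t * v s) (\<lambda>s. y s - t * v s)
          = ip y (\<lambda>s. y s - t * v s) - ip (\<lambda>s. t * v s) (\<lambda>s. y s - t * v s)"
        using ip_diff_l[OF yH tvH diff_in[OF yH tvH]] by simp
      also have "ip y (\<lambda>s. y s - t * v s) = ip y y - cnj t * z"
        using ip_diff_r[OF yH tvH yH] ip_scale_r[OF vH yH] z_def by simp
      also have "ip (\<lambda>s. t * v s) (\<lambda>s. y s - t * v s) = t * (cnj z - cnj t * of_real N)"
        using ip_scale_l[OF vH diff_in[OF yH tvH]] ip_diff_r[OF yH tvH vH] ip_scale_r[OF vH vH]
          ip_sym[OF yH vH] ip_self[OF vH] z_def N_def by simp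
      finally show ?thesis by (simp add: algebra_simps)
    qed
    have "Re (ip y y - cnj t * z - t * cnj z + t * cnj t * of_real N) \<ge> Re (ip y y)"
    proof -
      have "Re (ip (\<lambda>s. x s - p s - t * v s) (\<lambda>s. x s - p s - t * v s)) \<ge> m" using geq[OF vV] .
      moreover have "Re (ip y y) = m" using qp unfolding q_def y_def by simp
      ultimately show ?thesis using exp unfolding y_def by simp
    qed
    from orth_alg[OF this t_def e0 eN] show ?thesis unfolding z_def .
  qed
  have "y = (\<lambda>_. 0)" using orth yH yorth by blast
  hence "p = x" unfolding y_def by (simp add: fun_eq_iff)
  thus ?thesis using XV cp by blast
qed


lemma sum_in: "finite S \<Longrightarrow> (\<forall>t\<in>S. h t \<in> H) \<Longrightarrow> (\<lambda>s. \<Sum>t\<in>S. c t * h t s) \<in> H"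
proof (induction S rule: finite_induct)
  case empty thus ?case using zero_in by simp
next
  case (insert a F)
  have ha: "h a \<in> H" and hF: "\<forall>t\<in>F. h t \<in> H" using insert.prems by auto
  have IH: "(\<lambda>s. \<Sum>t\<in>F. c t * h t s) \<in> H" using insert.IH[OF hF] .
  have "(\<lambda>s. (\<lambda>s. c a * h a s) s + (\<lambda>s. \<Sum>t\<in>F. c t * h t s) s) \<in> H"
    by (rule add_in[OF scale_in[OF ha] IH])
  moreover have "(\<lambda>s. \<Sum>t\<in>insert a F. c t * h t s) = (\<lambda>s. c a * h a s + (\<Sum>t\<in>F. c t * h t s))"
    using insert(1,2) by simp
  ultimately show ?case by simp
qed

lemma ip_sum_r: "finite S \<Longrightarrow> (\<forall>t\<in>S. h t \<in> H) \<Longrightarrow> x \<in> H \<Longrightarrow>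
   ip x (\<lambda>s. \<Sum>t\<in>S. c t * h t s) = (\<Sum>t\<in>S. cnj (c t) * ip x (h t))"
proof (induction S rule: finite_induct)
  case empty thus ?case using ip_zero_r by simp
next
  case (insert a F)
  have ha: "h a \<in> H" and hF: "\<forall>t\<in>F. h t \<in> H" and x: "x \<in> H" using insert.prems by auto
  have IH: "ip x (\<lambda>s. \<Sum>t\<in>F. c t * h t s) = (\<Sum>t\<in>F. cnj (c t) * ip x (h t))"
    using insert.IH[OF hF x] .
  have e: "(\<lambda>s. \<Sum>t\<in>insert a F. c t * h t s) = (\<lambda>s. (\<lambda>s. c a * h a s) s + (\<lambda>s. \<Sum>t\<in>F. c t * h t s) s)"
    using insert(1,2) by simp
  have "ip x (\<lambda>s. (\<lambda>s. c a * h a s) s + (\<lambda>s. \<Sum>t\<in>F. c t * h t s) s)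
      = ip x (\<lambda>s. c a * h a s) + ip x (\<lambda>s. \<Sum>t\<in>F. c t * h t s)"
    by (rule ip_add_r[OF scale_in[OF ha] sum_in[OF insert(1) hF] x])
  also have "ip x (\<lambda>s. c a * h a s) = cnj (c a) * ip x (h a)" by (rule ip_scale_r[OF ha x])
  finally have "ip x (\<lambda>s. \<Sum>t\<in>insert a F. c t * h t s) = cnj (c a) * ip x (h a) + (\<Sum>t\<in>F. cnj (c t) * ip x (h t))"
    unfolding e IH .
  thus ?case using insert(1,2) by simp
qed

lemma ip_sum_l: "finite S \<Longrightarrow> (\<forall>t\<in>S. h t \<in> H) \<Longrightarrow> z \<in> H \<Longrightarrow>
   ip (\<lambda>s. \<Sum>t\<in>S. c t * h t s) z = (\<Sum>t\<in>S. c t * ip (h t) z)"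
proof (induction S rule: finite_induct)
  case empty thus ?case using ip_zero_l by simp
next
  case (insert a F)
  have ha: "h a \<in> H" and hF: "\<forall>t\<in>F. h t \<in> H" and z: "z \<in> H" using insert.prems by auto
  have IH: "ip (\<lambda>s. \<Sum>t\<in>F. c t * h t s) z = (\<Sum>t\<in>F. c t * ip (h t) z)"
    using insert.IH[OF hF z] .
  have e: "(\<lambda>s. \<Sum>t\<in>insert a F. c t * h t s) = (\<lambda>s. (\<lambda>s. c a * h a s) s + (\<lambda>s. \<Sum>t\<in>F. c t * h t s) s)"
    using insert(1,2) by simp
  have "ip (\<lambda>s. (\<lambda>s. c a * h a s) s + (\<lambda>s. \<Sum>t\<in>F. c t * h t s) s) z
      = ip (\<lambda>s. c a * h a s) z + ip (\<lambda>s. \<Sum>t\<in>F. c t * h t s) z"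
    by (rule ip_add_l[OF scale_in[OF ha] sum_in[OF insert(1) hF] z])
  also have "ip (\<lambda>s. c a * h a s) z = c a * ip (h a) z" by (rule ip_scale_l[OF ha z])
  finally have "ip (\<lambda>s. \<Sum>t\<in>insert a F. c t * h t s) z = c a * ip (h a) z + (\<Sum>t\<in>F. c t * ip (h t) z)"
    unfolding e IH .
  thus ?case using insert(1,2) by simp
qed

end

definition tr :: "real \<Rightarrow> (complex \<Rightarrow> complex) \<Rightarrow> complex \<Rightarrow> complex" where
  "tr c f = (\<lambda>s. f (s - \<i> * of_real c))"

definition Kf :: "(nat \<Rightarrow> real) \<Rightarrow> real \<Rightarrow> complex \<Rightarrow> complex \<Rightarrow> complex" where
  "Kf a \<rho> t = (\<lambda>s. dkernel a \<rho> s t)"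

definition Vk :: "(nat \<Rightarrow> real) \<Rightarrow> real \<Rightarrow> (complex \<Rightarrow> complex) set" where
  "Vk a \<rho> = {v. \<exists>S c. finite S \<and> S \<subseteq> halfplane \<rho> \<and> v = (\<lambda>s. \<Sum>t\<in>S. c t * Kf a \<rho> t s)}"

lemma halfplane_shift: "s - \<i> * of_real c \<in> halfplane \<rho> \<longleftrightarrow> s \<in> halfplane \<rho>"
  unfolding halfplane_def by simp
lemma halfplane_shift2: "s + \<i> * of_real c \<in> halfplane \<rho> \<longleftrightarrow> s \<in> halfplane \<rho>"
  unfolding halfplane_def by simp

lemma tr_K: "tr c (Kf a \<rho> t) = Kf a \<rho> (t + \<i> * of_real c)"
proof -
  have e: "- (s - \<i> * of_real c) - cnj t = - s - cnj (t + \<i> * of_real c)" for s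
    by (simp add: complex_eq_iff)
  show ?thesis unfolding tr_def Kf_def dkernel_def
    by (rule ext, simp only: halfplane_shift e)
qed

lemma tr_inv: "tr (-c) (tr c f) = f" "tr c (tr (-c) f) = f"
  by (simp_all add: tr_def)

locale rk = hs +
  fixes a :: "nat \<Rightarrow> real" and \<rho> :: real
  assumes rk: "is_rkhs H ip \<rho> (dkernel a \<rho>)"
begin

lemma vanish: "f \<in> H \<Longrightarrow> s \<notin> halfplane \<rho> \<Longrightarrow> f s = 0"
  using rk unfolding is_rkhs_def by blast
lemma K_in: "t \<in> halfplane \<rho> \<Longrightarrow> Kf a \<rho> t \<in> H"
  using rk unfolding is_rkhs_def Kf_def by blast
lemma repr: "t \<in> halfplane \<rho> \<Longrightarrow> f \<in> H \<Longrightarrow> ip f (Kf a \<rho> t) = f t"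
  using rk unfolding is_rkhs_def Kf_def by blast

lemma eval_conv:
  assumes XH: "\<forall>n. X n \<in> H" and x: "x \<in> H" and cx: "conv X x"
  shows "(\<lambda>n. X n s) \<longlonglongrightarrow> x s"
proof (cases "s \<in> halfplane \<rho>")
  case True
  have "(\<lambda>n. ip (X n) (Kf a \<rho> s)) \<longlonglongrightarrow> ip x (Kf a \<rho> s)"
  proof (rule conv_ip[OF XH _ x K_in[OF True] cx])
    show "\<forall>n. Kf a \<rho> s \<in> H" using K_in[OF True] by simp
    show "conv (\<lambda>n. Kf a \<rho> s) (Kf a \<rho> s)" unfolding conv_def hnorm_def
      using ip_zero_l zero_in by simp
  qed
  thus ?thesis using repr[OF True] XH x by simp
next
  case False
  have "\<forall>n. X n s = 0" using vanish[OF _ False] XH by blast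
  moreover have "x s = 0" using vanish[OF x False] .
  ultimately show ?thesis by simp
qed

lemma Vk_sub: "Vk a \<rho> \<subseteq> H"
proof
  fix v assume "v \<in> Vk a \<rho>"
  then obtain S c where S: "finite S" "S \<subseteq> halfplane \<rho>" and v: "v = (\<lambda>s. \<Sum>t\<in>S. c t * Kf a \<rho> t s)"
    unfolding Vk_def by blast
  have "\<forall>t\<in>S. Kf a \<rho> t \<in> H" using K_in S(2) by blast
  from sum_in[OF S(1) this] show "v \<in> H" unfolding v .
qed

lemma Vk_zero: "(\<lambda>_. 0) \<in> Vk a \<rho>"
  unfolding Vk_def by (rule CollectI, rule exI[of _ "{}"]) simp

lemma Vk_K: "t \<in> halfplane \<rho> \<Longrightarrow> Kf a \<rho> t \<in> Vk a \<rho>"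
  unfolding Vk_def by (rule CollectI, rule exI[of _ "{t}"], rule exI[of _ "\<lambda>_. 1"]) simp

lemma Vk_scale: "v \<in> Vk a \<rho> \<Longrightarrow> (\<lambda>s. d * v s) \<in> Vk a \<rho>"
proof -
  assume "v \<in> Vk a \<rho>"
  then obtain S c where S: "finite S" "S \<subseteq> halfplane \<rho>" and v: "v = (\<lambda>s. \<Sum>t\<in>S. c t * Kf a \<rho> t s)"
    unfolding Vk_def by blast
  have eq: "(\<lambda>s. d * v s) = (\<lambda>s. \<Sum>t\<in>S. (d * c t) * Kf a \<rho> t s)"
    unfolding v by (simp add: sum_distrib_left mult.assoc)
  have "\<exists>S' c'. finite S' \<and> S' \<subseteq> halfplane \<rho> \<and> (\<lambda>s. d * v s) = (\<lambda>s. \<Sum>t\<in>S'. c' t * Kf a \<rho> t s)"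
    using S eq by (intro exI[of _ S] exI[of _ "\<lambda>t. d * c t"]) simp
  thus ?thesis unfolding Vk_def mem_Collect_eq .
qed

lemma Vk_add: "v \<in> Vk a \<rho> \<Longrightarrow> w \<in> Vk a \<rho> \<Longrightarrow> (\<lambda>s. v s + w s) \<in> Vk a \<rho>"
proof -
  assume "v \<in> Vk a \<rho>" "w \<in> Vk a \<rho>"
  then obtain S c S' c' where S: "finite S" "S \<subseteq> halfplane \<rho>" and v: "v = (\<lambda>s. \<Sum>t\<in>S. c t * Kf a \<rho> t s)"
    and S': "finite S'" "S' \<subseteq> halfplane \<rho>" and w: "w = (\<lambda>s. \<Sum>t\<in>S'. c' t * Kf a \<rho> t s)"
    unfolding Vk_def by blast
  define e where "e t = (if t \<in> S then c t else 0) + (if t \<in> S' then c' t else 0)" for t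
  have "(\<lambda>s. v s + w s) = (\<lambda>s. \<Sum>t\<in>S \<union> S'. e t * Kf a \<rho> t s)"
  proof
    fix s
    have "(\<Sum>t\<in>S \<union> S'. e t * Kf a \<rho> t s)
       = (\<Sum>t\<in>S \<union> S'. (if t \<in> S then c t * Kf a \<rho> t s else 0))
       + (\<Sum>t\<in>S \<union> S'. (if t \<in> S' then c' t * Kf a \<rho> t s else 0))"
    proof -
      have "(\<Sum>t\<in>S \<union> S'. e t * Kf a \<rho> t s) = (\<Sum>t\<in>S \<union> S'. (if t \<in> S then c t * Kf a \<rho> t s else 0)
          + (if t \<in> S' then c' t * Kf a \<rho> t s else 0))"
        by (rule sum.cong) (simp_all add: e_def distrib_right)
      thus ?thesis by (simp only: sum.distrib)
    qed
    also have "(\<Sum>t\<in>S \<union> S'. (if t \<in> S then c t * Kf a \<rho> t s else 0)) = (\<Sum>t\<in>S. c t * Kf a \<rho> t s)"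
    proof -
      have "(S \<union> S') \<inter> S = S" by blast
      thus ?thesis using sum.inter_restrict[of "S \<union> S'" "\<lambda>t. c t * Kf a \<rho> t s" S] S S' by simp
    qed
    also have "(\<Sum>t\<in>S \<union> S'. (if t \<in> S' then c' t * Kf a \<rho> t s else 0)) = (\<Sum>t\<in>S'. c' t * Kf a \<rho> t s)"
    proof -
      have "(S \<union> S') \<inter> S' = S'" by blast
      thus ?thesis using sum.inter_restrict[of "S \<union> S'" "\<lambda>t. c' t * Kf a \<rho> t s" S'] S S' by simp
    qed
    finally show "v s + w s = (\<Sum>t\<in>S \<union> S'. e t * Kf a \<rho> t s)" unfolding v w by simp
  qed
  hence "\<exists>S'' c''. finite S'' \<and> S'' \<subseteq> halfplane \<rho> \<and> (\<lambda>s. v s + w s) = (\<lambda>s. \<Sum>t\<in>S''. c'' t * Kf a \<rho> t s)"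
    using S S' by (intro exI[of _ "S \<union> S'"] exI[of _ e]) simp
  thus ?thesis unfolding Vk_def mem_Collect_eq .
qed

lemma Vk_diff: "v \<in> Vk a \<rho> \<Longrightarrow> w \<in> Vk a \<rho> \<Longrightarrow> (\<lambda>s. v s - w s) \<in> Vk a \<rho>"
proof -
  assume "v \<in> Vk a \<rho>" "w \<in> Vk a \<rho>"
  hence "(\<lambda>s. v s + (\<lambda>s. (-1) * w s) s) \<in> Vk a \<rho>" using Vk_add Vk_scale by blast
  thus ?thesis by simp
qed

lemma Vk_dense: "x \<in> H \<Longrightarrow> \<exists>X. (\<forall>n. X n \<in> Vk a \<rho>) \<and> conv X x"
proof (rule density[OF Vk_sub Vk_zero])
  show "\<forall>v\<in>Vk a \<rho>. \<forall>w\<in>Vk a \<rho>. (\<lambda>s. v s + w s) \<in> Vk a \<rho>" using Vk_add by blast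
  show "\<forall>c. \<forall>v\<in>Vk a \<rho>. (\<lambda>s. c * v s) \<in> Vk a \<rho>" using Vk_scale by blast
  show "\<forall>y\<in>H. (\<forall>v\<in>Vk a \<rho>. ip y v = 0) \<longrightarrow> y = (\<lambda>_. 0)"
  proof (intro ballI impI)
    fix y assume y: "y \<in> H" and o: "\<forall>v\<in>Vk a \<rho>. ip y v = 0"
    show "y = (\<lambda>_. 0)"
    proof
      fix s show "y s = 0"
      proof (cases "s \<in> halfplane \<rho>")
        case True
        have "ip y (Kf a \<rho> s) = 0" using o Vk_K[OF True] by blast
        thus ?thesis using repr[OF True y] by simp
      qed (use vanish y in auto)
    qed
  qed
qed


lemma K_shift: "Kf a \<rho> t (s - \<i> * of_real c) = Kf a \<rho> (t + \<i> * of_real c) s"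
  using fun_cong[OF tr_K[of c a \<rho> t], of s] unfolding tr_def by simp

lemma tr_sum: "tr c (\<lambda>s. \<Sum>t\<in>S. cc t * Kf a \<rho> t s) = (\<lambda>s. \<Sum>t\<in>S. cc t * Kf a \<rho> (t + \<i> * of_real c) s)"
  unfolding tr_def by (simp add: K_shift)

lemma tr_Vk: assumes "v \<in> Vk a \<rho>" shows "tr c v \<in> Vk a \<rho>"
proof -
  obtain S cc where S: "finite S" "S \<subseteq> halfplane \<rho>" and v: "v = (\<lambda>s. \<Sum>t\<in>S. cc t * Kf a \<rho> t s)"
    using assms unfolding Vk_def by blast
  define g where "g = (\<lambda>t::complex. t + \<i> * of_real c)"
  have inj: "inj_on g S" unfolding g_def by (simp add: inj_on_def)
  have "tr c v = (\<lambda>s. \<Sum>t\<in>S. cc t * Kf a \<rho> (g t) s)" unfolding v tr_sum g_def ..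
  also have "\<dots> = (\<lambda>s. \<Sum>t\<in>g ` S. cc (t - \<i> * of_real c) * Kf a \<rho> t s)"
    using inj by (simp add: sum.reindex g_def)
  finally have eq: "tr c v = (\<lambda>s. \<Sum>t\<in>g ` S. cc (t - \<i> * of_real c) * Kf a \<rho> t s)" .
  have sub: "g ` S \<subseteq> halfplane \<rho>" using S(2) unfolding g_def by (auto simp: halfplane_shift2)
  have "\<exists>S' c'. finite S' \<and> S' \<subseteq> halfplane \<rho> \<and> tr c v = (\<lambda>s. \<Sum>t\<in>S'. c' t * Kf a \<rho> t s)"
    using S(1) sub eq by (intro exI[of _ "g ` S"] exI[of _ "\<lambda>t. cc (t - \<i> * of_real c)"]) simp
  thus ?thesis unfolding Vk_def mem_Collect_eq .
qed

lemma tr_ip_V: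
  assumes x: "x \<in> H" and tx: "tr c x \<in> H" and w: "w \<in> Vk a \<rho>"
  shows "ip (tr c x) (tr c w) = ip x w"
proof -
  obtain S cc where S: "finite S" "S \<subseteq> halfplane \<rho>" and wd: "w = (\<lambda>s. \<Sum>t\<in>S. cc t * Kf a \<rho> t s)"
    using w unfolding Vk_def by blast
  have KS: "\<forall>t\<in>S. Kf a \<rho> t \<in> H" using S(2) K_in by blast
  have KS2: "\<forall>t\<in>S. Kf a \<rho> (t + \<i> * of_real c) \<in> H" using S(2) K_in halfplane_shift2 by blast
  have "ip (tr c x) (tr c w) = (\<Sum>t\<in>S. cnj (cc t) * ip (tr c x) (Kf a \<rho> (t + \<i> * of_real c)))"
    unfolding wd tr_sum by (rule ip_sum_r[OF S(1) KS2 tx])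
  also have "\<dots> = (\<Sum>t\<in>S. cnj (cc t) * x t)"
  proof (rule sum.cong[OF refl])
    fix t assume t: "t \<in> S"
    have th: "t + \<i> * of_real c \<in> halfplane \<rho>" using S(2) t halfplane_shift2 by blast
    show "cnj (cc t) * ip (tr c x) (Kf a \<rho> (t + \<i> * of_real c)) = cnj (cc t) * x t"
      using repr[OF th tx] unfolding tr_def by simp
  qed
  also have "\<dots> = (\<Sum>t\<in>S. cnj (cc t) * ip x (Kf a \<rho> t))"
  proof (rule sum.cong[OF refl])
    fix t assume t: "t \<in> S"
    show "cnj (cc t) * x t = cnj (cc t) * ip x (Kf a \<rho> t)" using repr[OF _ x] S(2) t by auto
  qed
  also have "\<dots> = ip x w" unfolding wd by (rule ip_sum_r[OF S(1) KS x, symmetric])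
  finally show ?thesis .
qed

lemma tr_nrm_V: assumes w: "w \<in> Vk a \<rho>" shows "nrm (tr c w) = nrm w"
proof -
  have wH: "w \<in> H" using Vk_sub w by blast
  have twH: "tr c w \<in> H" using tr_Vk[OF w] Vk_sub by blast
  have "ip (tr c w) (tr c w) = ip w w" by (rule tr_ip_V[OF wH twH w])
  thus ?thesis by (simp add: hnorm_def)
qed

lemma tr_conv:
  assumes x: "x \<in> H" and XV: "\<forall>n. X n \<in> Vk a \<rho>" and cx: "conv X x"
  shows "tr c x \<in> H \<and> conv (\<lambda>n. tr c (X n)) (tr c x)"
proof -
  define Y where "Y n = tr c (X n)" for n
  have YV: "\<forall>n. Y n \<in> Vk a \<rho>" unfolding Y_def using XV tr_Vk by blast
  have YH: "\<forall>n. Y n \<in> H" using YV Vk_sub by blast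
  have XH: "\<forall>n. X n \<in> H" using XV Vk_sub by blast
  have cX: "\<forall>e>0. \<exists>N. \<forall>m\<ge>N. \<forall>n\<ge>N. nrm (\<lambda>s. X m s - X n s) < e" using conv_cauchy[OF XH x cx] .
  have eqn: "nrm (\<lambda>s. Y m s - Y n s) = nrm (\<lambda>s. X m s - X n s)" for m n
  proof -
    have "(\<lambda>s. Y m s - Y n s) = tr c (\<lambda>s. X m s - X n s)" unfolding Y_def tr_def by simp
    thus ?thesis using tr_nrm_V Vk_diff XV by simp
  qed
  have cY: "\<forall>e>0. \<exists>N. \<forall>m\<ge>N. \<forall>n\<ge>N. nrm (\<lambda>s. Y m s - Y n s) < e" using cX unfolding eqn .
  obtain L where L: "L \<in> H" and cL: "conv Y L" using complete[OF YH cY] by blast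
  have "L = tr c x"
  proof
    fix s
    have l1: "(\<lambda>n. Y n s) \<longlonglongrightarrow> L s" by (rule eval_conv[OF YH L cL])
    have l2: "(\<lambda>n. X n (s - \<i> * of_real c)) \<longlonglongrightarrow> x (s - \<i> * of_real c)" by (rule eval_conv[OF XH x cx])
    have "(\<lambda>n. Y n s) = (\<lambda>n. X n (s - \<i> * of_real c))" unfolding Y_def tr_def by simp
    thus "L s = tr c x s" using LIMSEQ_unique[OF l1] l2 unfolding tr_def by simp
  qed
  thus ?thesis using L cL unfolding Y_def by simp
qed

lemma tr_in: "x \<in> H \<Longrightarrow> tr c x \<in> H"
  using Vk_dense tr_conv by blast

lemma tr_iso: assumes x: "x \<in> H" and y: "y \<in> H" shows "ip (tr c x) (tr c y) = ip x y"
proof -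
  obtain X where XV: "\<forall>n. X n \<in> Vk a \<rho>" and cX: "conv X x" using Vk_dense[OF x] by blast
  obtain W where WV: "\<forall>n. W n \<in> Vk a \<rho>" and cW: "conv W y" using Vk_dense[OF y] by blast
  have XH: "\<forall>n. X n \<in> H" and WH: "\<forall>n. W n \<in> H" using XV WV Vk_sub by auto
  have tX: "conv (\<lambda>n. tr c (X n)) (tr c x)" using tr_conv[OF x XV cX] by blast
  have tW: "conv (\<lambda>n. tr c (W n)) (tr c y)" using tr_conv[OF y WV cW] by blast
  have tXH: "\<forall>n. tr c (X n) \<in> H" and tWH: "\<forall>n. tr c (W n) \<in> H" using XV WV tr_Vk Vk_sub by auto
  have l1: "(\<lambda>n. ip (tr c (X n)) (tr c (W n))) \<longlonglongrightarrow> ip (tr c x) (tr c y)"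
    by (rule conv_ip[OF tXH tWH tr_in[OF x] tr_in[OF y] tX tW])
  have l2: "(\<lambda>n. ip (X n) (W n)) \<longlonglongrightarrow> ip x y"
    by (rule conv_ip[OF XH WH x y cX cW])
  have "(\<lambda>n. ip (tr c (X n)) (tr c (W n))) = (\<lambda>n. ip (X n) (W n))"
  proof
    fix n show "ip (tr c (X n)) (tr c (W n)) = ip (X n) (W n)"
      using tr_ip_V[OF _ _ ] XH tXH WV by blast
  qed
  thus ?thesis using LIMSEQ_unique[OF l1] l2 by simp
qed

lemma tr_unitary: "unitary_on H ip (tr c)"
  unfolding unitary_on_def linear_on_def
proof (intro conjI ballI allI)
  show "\<And>x y. tr c (\<lambda>s. x s + y s) = (\<lambda>s. tr c x s + tr c y s)" by (simp add: tr_def)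
  show "\<And>d x. tr c (\<lambda>s. d * x s) = (\<lambda>s. d * tr c x s)" by (simp add: tr_def)
  show "\<And>x y. x \<in> H \<Longrightarrow> y \<in> H \<Longrightarrow> ip (tr c x) (tr c y) = ip x y" by (rule tr_iso)
  show "bij_betw (tr c) H H"
  proof (rule bij_betw_byWitness[where f'="tr (-c)"])
    show "\<forall>x\<in>H. tr (-c) (tr c x) = x" using tr_inv by simp
    show "\<forall>x\<in>H. tr c (tr (-c) x) = x" using tr_inv by simp
    show "tr c ` H \<subseteq> H" using tr_in by blast
    show "tr (-c) ` H \<subseteq> H" using tr_in by blast
  qed
qed

end


lemma fb_tr: "tr c (fbeta b \<rho> \<beta>) = fbeta b \<rho> (\<beta> + c)"
proof
  fix s
  show "tr c (fbeta b \<rho> \<beta>) s = fbeta b \<rho> (\<beta> + c) s"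
  proof (cases "s \<in> halfplane \<rho>")
    case True
    have e1: "- (s - \<i> * of_real c) = - s + \<i> * of_real c" by simp
    have e2: "\<i> * complex_of_real (\<beta> + c) = \<i> * of_real \<beta> + \<i> * of_real c" by (simp add: distrib_left)
    have t: "of_nat (Suc n) powr (\<i> * of_real \<beta>) * complex_of_real (b (Suc n)) * of_nat (Suc n) powr (- (s - \<i> * of_real c))
       = of_nat (Suc n) powr (\<i> * complex_of_real (\<beta> + c)) * complex_of_real (b (Suc n)) * of_nat (Suc n) powr (- s)" for n
      unfolding e1 e2 powr_add by (simp only: mult_ac)
    have True': "s - \<i> * of_real c \<in> halfplane \<rho>" using True halfplane_shift by blast
    show ?thesis unfolding tr_def fbeta_def by (simp only: True True' if_True t)
  next
    case False
    thus ?thesis unfolding tr_def fbeta_def by (simp add: halfplane_shift)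
  qed
qed

lemma fb_shift: "fbeta b \<rho> \<beta> (s - \<i> * of_real c) = fbeta b \<rho> (\<beta> + c) s"
  using fun_cong[OF fb_tr[of c b \<rho> \<beta>], of s] unfolding tr_def by simp

lemma cspan_zero: "(\<lambda>s. 0) \<in> cspan S"
  unfolding cspan_def by (rule CollectI, intro exI[of _ "{}"]) simp

lemma cspan_base: "h \<in> S \<Longrightarrow> h \<in> cspan S"
  unfolding cspan_def by (rule CollectI, intro exI[of _ "{h}"] exI[of _ "\<lambda>_. 1"]) simp

lemma cspan_scale: assumes "x \<in> cspan S" shows "(\<lambda>s. d * x s) \<in> cspan S"
proof -
  obtain F c where F: "finite F" "F \<subseteq> S" and x: "x = (\<lambda>s. \<Sum>h\<in>F. c h * h s)"
    using assms unfolding cspan_def by blast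
  have eq: "(\<lambda>s. d * x s) = (\<lambda>s. \<Sum>h\<in>F. (d * c h) * h s)"
    unfolding x by (simp add: sum_distrib_left mult.assoc)
  have "\<exists>F' c'. finite F' \<and> F' \<subseteq> S \<and> (\<lambda>s. d * x s) = (\<lambda>s. \<Sum>h\<in>F'. c' h * h s)"
    using F eq by (intro exI[of _ F] exI[of _ "\<lambda>h. d * c h"]) simp
  thus ?thesis unfolding cspan_def mem_Collect_eq .
qed

lemma cspan_add: assumes "x \<in> cspan S" "y \<in> cspan S" shows "(\<lambda>s. x s + y s) \<in> cspan S"
proof -
  obtain F c G c' where F: "finite F" "F \<subseteq> S" and x: "x = (\<lambda>s. \<Sum>h\<in>F. c h * h s)"
    and G: "finite G" "G \<subseteq> S" and y: "y = (\<lambda>s. \<Sum>h\<in>G. c' h * h s)"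
    using assms unfolding cspan_def by blast
  define e where "e h = (if h \<in> F then c h else 0) + (if h \<in> G then c' h else 0)" for h
  have eq: "(\<lambda>s. x s + y s) = (\<lambda>s. \<Sum>h\<in>F \<union> G. e h * h s)"
  proof
    fix s
    have "(\<Sum>h\<in>F \<union> G. e h * h s) = (\<Sum>h\<in>F \<union> G. (if h \<in> F then c h * h s else 0)
          + (if h \<in> G then c' h * h s else 0))"
      by (rule sum.cong) (simp_all add: e_def distrib_right)
    also have "\<dots> = (\<Sum>h\<in>F \<union> G. (if h \<in> F then c h * h s else 0)) + (\<Sum>h\<in>F \<union> G. (if h \<in> G then c' h * h s else 0))"
      by (simp only: sum.distrib)
    also have "(\<Sum>h\<in>F \<union> G. (if h \<in> F then c h * h s else 0)) = (\<Sum>h\<in>F. c h * h s)"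
    proof -
      have "(F \<union> G) \<inter> F = F" by blast
      thus ?thesis using sum.inter_restrict[of "F \<union> G" "\<lambda>h. c h * h s" F] F G by simp
    qed
    also have "(\<Sum>h\<in>F \<union> G. (if h \<in> G then c' h * h s else 0)) = (\<Sum>h\<in>G. c' h * h s)"
    proof -
      have "(F \<union> G) \<inter> G = G" by blast
      thus ?thesis using sum.inter_restrict[of "F \<union> G" "\<lambda>h. c' h * h s" G] F G by simp
    qed
    finally show "x s + y s = (\<Sum>h\<in>F \<union> G. e h * h s)" unfolding x y by simp
  qed
  have "\<exists>F' c''. finite F' \<and> F' \<subseteq> S \<and> (\<lambda>s. x s + y s) = (\<lambda>s. \<Sum>h\<in>F'. c'' h * h s)"
    using F G eq by (intro exI[of _ "F \<union> G"] exI[of _ e]) simp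
  thus ?thesis unfolding cspan_def mem_Collect_eq .
qed

lemma comb:
  assumes T_lin: "linear_on (cspan (range (fbeta b \<rho>))) T"
    and T_f: "\<forall>\<beta>::real. T (fbeta b \<rho> \<beta>) = (\<lambda>s. \<i> * of_real \<beta> * fbeta b \<rho> \<beta> s)"
    and I: "finite I"
  shows "(\<lambda>s. \<Sum>i\<in>I. d i * fbeta b \<rho> (\<phi> i) s) \<in> cspan (range (fbeta b \<rho>))
     \<and> T (\<lambda>s. \<Sum>i\<in>I. d i * fbeta b \<rho> (\<phi> i) s) = (\<lambda>s. \<Sum>i\<in>I. d i * (\<i> * of_real (\<phi> i)) * fbeta b \<rho> (\<phi> i) s)"
  using I
proof (induction I rule: finite_induct)
  note T_add = T_lin[unfolded linear_on_def, THEN conjunct1, rule_format]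
  note T_sc = T_lin[unfolded linear_on_def, THEN conjunct2, rule_format]
  case empty
  have f0: "fbeta b \<rho> 0 \<in> cspan (range (fbeta b \<rho>))" by (rule cspan_base) simp
  have "T (\<lambda>s. 0 * fbeta b \<rho> 0 s) = (\<lambda>s. 0 * T (fbeta b \<rho> 0) s)"
    by (rule T_sc[OF f0])
  thus ?case using cspan_zero by simp
next
  case (insert j I)
  note T_add = T_lin[unfolded linear_on_def, THEN conjunct1, rule_format]
  note T_sc = T_lin[unfolded linear_on_def, THEN conjunct2, rule_format]
  let ?D = "cspan (range (fbeta b \<rho>))"
  let ?r = "\<lambda>s. \<Sum>i\<in>I. d i * fbeta b \<rho> (\<phi> i) s"
  have fj: "fbeta b \<rho> (\<phi> j) \<in> ?D" by (rule cspan_base) simp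
  have sj: "(\<lambda>s. d j * fbeta b \<rho> (\<phi> j) s) \<in> ?D" by (rule cspan_scale[OF fj])
  have rD: "?r \<in> ?D" using insert.IH by blast
  have eq: "(\<lambda>s. \<Sum>i\<in>insert j I. d i * fbeta b \<rho> (\<phi> i) s) = (\<lambda>s. (\<lambda>s. d j * fbeta b \<rho> (\<phi> j) s) s + ?r s)"
    using insert(1,2) by simp
  have mem: "(\<lambda>s. (\<lambda>s. d j * fbeta b \<rho> (\<phi> j) s) s + ?r s) \<in> ?D" by (rule cspan_add[OF sj rD])
  have "T (\<lambda>s. (\<lambda>s. d j * fbeta b \<rho> (\<phi> j) s) s + ?r s) = (\<lambda>s. T (\<lambda>s. d j * fbeta b \<rho> (\<phi> j) s) s + T ?r s)"
    by (rule T_add[OF sj rD])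
  also have "T (\<lambda>s. d j * fbeta b \<rho> (\<phi> j) s) = (\<lambda>s. d j * T (fbeta b \<rho> (\<phi> j)) s)"
    by (rule T_sc[OF fj])
  also have "T ?r = (\<lambda>s. \<Sum>i\<in>I. d i * (\<i> * of_real (\<phi> i)) * fbeta b \<rho> (\<phi> i) s)" using insert.IH by blast
  finally have "T (\<lambda>s. (\<lambda>s. d j * fbeta b \<rho> (\<phi> j) s) s + ?r s)
     = (\<lambda>s. d j * (\<i> * of_real (\<phi> j) * fbeta b \<rho> (\<phi> j) s) + (\<Sum>i\<in>I. d i * (\<i> * of_real (\<phi> i)) * fbeta b \<rho> (\<phi> i) s))"
    using T_f by simp
  thus ?case using mem eq insert(1,2) by (simp add: mult.assoc)
qed

lemma cspan_rep:
  assumes "g \<in> cspan (range (fbeta b \<rho>))"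
  shows "\<exists>B d. finite B \<and> g = (\<lambda>s. \<Sum>\<beta>\<in>B. d \<beta> * fbeta b \<rho> \<beta> s)"
proof -
  obtain F c where F: "finite F" "F \<subseteq> range (fbeta b \<rho>)" and g: "g = (\<lambda>s. \<Sum>h\<in>F. c h * h s)"
    using assms unfolding cspan_def by blast
  obtain B where B: "inj_on (fbeta b \<rho>) B" "F = fbeta b \<rho> ` B"
    using F(2) subset_image_inj[of F "fbeta b \<rho>" UNIV] by auto
  have fin: "finite B" using F(1) B finite_image_iff by blast
  have eq: "g = (\<lambda>s. \<Sum>\<beta>\<in>B. c (fbeta b \<rho> \<beta>) * fbeta b \<rho> \<beta> s)"
    unfolding g B(2) using B(1) by (simp add: sum.reindex)
  show ?thesis by (rule exI[of _ B], rule exI[of _ "\<lambda>\<beta>. c (fbeta b \<rho> \<beta>)"]) (simp add: fin eq)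
qed


lemma part1:
  assumes ch: "chilbert H ip" and rkh: "is_rkhs H ip \<rho> (dkernel a \<rho>)"
    and T_lin: "linear_on (cspan (range (fbeta b \<rho>))) T"
    and T_f: "\<forall>\<beta>::real. T (fbeta b \<rho> \<beta>) = (\<lambda>s. \<i> * of_real \<beta> * fbeta b \<rho> \<beta> s)"
  shows "T_homogeneous H ip (cspan (range (fbeta b \<rho>))) T"
proof -
  interpret R: rk H ip a \<rho> using ch rkh by (simp add: rk_def hs_def rk_axioms_def)
  let ?D = "cspan (range (fbeta b \<rho>))"
  have trg: "tr c (\<lambda>s. \<Sum>\<beta>\<in>B. d \<beta> * fbeta b \<rho> \<beta> s) = (\<lambda>s. \<Sum>\<beta>\<in>B. d \<beta> * fbeta b \<rho> (\<beta> + c) s)" for c B d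
    unfolding tr_def by (simp add: fb_shift)
  show ?thesis unfolding T_homogeneous_def
  proof (intro allI)
    fix c :: real
    show "\<exists>U. unitary_on H ip U \<and> U ` ?D \<subseteq> ?D \<and> (\<forall>f\<in>?D. U (T f) = (\<lambda>s. T (U f) s - \<i> * of_real c * U f s))"
    proof (intro exI[of _ "tr c"] conjI ballI subsetI)
      show "unitary_on H ip (tr c)" by (rule R.tr_unitary)
    next
      fix y assume "y \<in> tr c ` ?D"
      then obtain g where g: "g \<in> ?D" and y: "y = tr c g" by blast
      obtain B d where B: "finite B" and gd: "g = (\<lambda>s. \<Sum>\<beta>\<in>B. d \<beta> * fbeta b \<rho> \<beta> s)"
        using cspan_rep[OF g] by blast
      have "y = (\<lambda>s. \<Sum>\<beta>\<in>B. d \<beta> * fbeta b \<rho> (\<beta> + c) s)" unfolding y gd trg ..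
      thus "y \<in> ?D" using comb[OF T_lin T_f B, of d "\<lambda>\<beta>. \<beta> + c"] by simp
    next
      fix g assume g: "g \<in> ?D"
      obtain B d where B: "finite B" and gd: "g = (\<lambda>s. \<Sum>\<beta>\<in>B. d \<beta> * fbeta b \<rho> \<beta> s)"
        using cspan_rep[OF g] by blast
      have Tg: "T g = (\<lambda>s. \<Sum>\<beta>\<in>B. d \<beta> * (\<i> * of_real \<beta>) * fbeta b \<rho> \<beta> s)"
        using comb[OF T_lin T_f B, of d "\<lambda>\<beta>. \<beta>"] unfolding gd by simp
      have trTg: "tr c (T g) = (\<lambda>s. \<Sum>\<beta>\<in>B. d \<beta> * (\<i> * of_real \<beta>) * fbeta b \<rho> (\<beta> + c) s)"
        unfolding Tg tr_def by (simp add: fb_shift)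
      have trg': "tr c g = (\<lambda>s. \<Sum>\<beta>\<in>B. d \<beta> * fbeta b \<rho> (\<beta> + c) s)" unfolding gd trg ..
      have Ttrg: "T (\<lambda>s. \<Sum>\<beta>\<in>B. d \<beta> * fbeta b \<rho> (\<beta> + c) s) = (\<lambda>s. \<Sum>\<beta>\<in>B. d \<beta> * (\<i> * of_real (\<beta> + c)) * fbeta b \<rho> (\<beta> + c) s)"
        using comb[OF T_lin T_f B, of d "\<lambda>\<beta>. \<beta> + c"] by simp
      show "tr c (T g) = (\<lambda>s. T (tr c g) s - \<i> * of_real c * tr c g s)"
      proof
        fix s
        have "T (tr c g) s - \<i> * of_real c * tr c g s
          = (\<Sum>\<beta>\<in>B. d \<beta> * (\<i> * of_real (\<beta> + c)) * fbeta b \<rho> (\<beta> + c) s - \<i> * of_real c * (d \<beta> * fbeta b \<rho> (\<beta> + c) s))"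
          unfolding trg' Ttrg by (simp add: sum_subtractf sum_distrib_left)
        also have "\<dots> = (\<Sum>\<beta>\<in>B. d \<beta> * (\<i> * of_real \<beta>) * fbeta b \<rho> (\<beta> + c) s)"
          by (rule sum.cong) (simp_all add: algebra_simps)
        finally show "tr c (T g) s = T (tr c g) s - \<i> * of_real c * tr c g s" unfolding trTg by simp
      qed
    qed
  qed
qed



lemma J_int:
  fixes \<mu> T :: real assumes mu: "\<mu> \<noteq> 0" and T: "T \<ge> 0"
  shows "((\<lambda>\<beta>. exp (\<i> * of_real \<beta> * of_real \<mu>)) has_integral
     ((exp (\<i> * of_real (2*T) * of_real \<mu>) - exp (\<i> * of_real T * of_real \<mu>)) / (\<i> * of_real \<mu>))) {T..2*T}"
proof -
  define F where "F z = exp (\<i> * z * of_real \<mu>) / (\<i> * of_real \<mu>)" for z :: complex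
  have d: "(F has_field_derivative exp (\<i> * z * of_real \<mu>)) (at z)" for z
  proof -
    have "(F has_field_derivative exp (\<i> * z * of_real \<mu>) * (\<i> * of_real \<mu>) / (\<i> * of_real \<mu>)) (at z)"
      unfolding F_def by (auto intro!: derivative_eq_intros)
    thus ?thesis using mu by simp
  qed
  have "((\<lambda>\<beta>. exp (\<i> * of_real \<beta> * of_real \<mu>)) has_integral (F (of_real (2*T)) - F (of_real T))) {T..2*T}"
  proof (rule fundamental_theorem_of_calculus)
    show "T \<le> 2 * T" using T by simp
    fix x assume "x \<in> {T..2*T}"
    show "((\<lambda>x. F (of_real x)) has_vector_derivative exp (\<i> * of_real x * of_real \<mu>)) (at x within {T..2*T})"
      by (rule has_vector_derivative_real_field[OF d])
  qed
  thus ?thesis unfolding F_def by (simp add: diff_divide_distrib)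
qed

lemma J_bound:
  fixes \<mu> T :: real assumes mu: "\<mu> \<noteq> 0"
  shows "norm ((exp (\<i> * of_real (2*T) * of_real \<mu>) - exp (\<i> * of_real T * of_real \<mu>)) / (\<i> * of_real \<mu>)) \<le> 2 / \<bar>\<mu>\<bar>"
proof -
  have n1: "norm (exp (\<i> * of_real x * of_real \<mu>)) = 1" for x :: real
  proof -
    have "\<i> * of_real x * of_real \<mu> = \<i> * of_real (x * \<mu>)" by simp
    thus ?thesis using norm_exp_i_times by simp
  qed
  have "norm (exp (\<i> * of_real (2*T) * of_real \<mu>) - exp (\<i> * of_real T * of_real \<mu>)) \<le> 2"
    using norm_triangle_ineq4[of "exp (\<i> * of_real (2*T) * of_real \<mu>)" "exp (\<i> * of_real T * of_real \<mu>)"] n1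
    by simp
  moreover have "norm (\<i> * complex_of_real \<mu>) = \<bar>\<mu>\<bar>" by (simp add: norm_mult)
  ultimately show ?thesis using mu by (simp add: norm_divide divide_right_mono)
qed


lemma norm_expi: "norm (exp (\<i> * of_real x * of_real y)) = 1"
proof -
  have "\<i> * of_real x * of_real y = \<i> * of_real (x * y)" by simp
  thus ?thesis using norm_exp_i_times by simp
qed

lemma mean:
  fixes c :: "nat \<Rightarrow> complex" and lam :: "nat \<Rightarrow> real" and E C :: real
  assumes sc: "summable (\<lambda>n. norm (c n))" and inj: "inj lam" and E0: "E \<ge> 0" and C0: "C \<ge> 0"
    and bnd: "\<forall>\<beta>\<ge>1. norm (\<Sum>n. c n * exp (\<i> * of_real \<beta> * of_real (lam n))) \<le> E + C / \<beta>"
  shows "norm (c m) \<le> E"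
proof (rule ccontr)
  assume "\<not> norm (c m) \<le> E"
  hence gt: "norm (c m) > E" by simp
  define \<epsilon> where "\<epsilon> = (norm (c m) - E) / 3"
  have eps: "\<epsilon> > 0" unfolding \<epsilon>_def using gt by simp
  obtain N0 where N0: "\<forall>n\<ge>N0. norm (\<Sum>i. norm (c (i + n))) < \<epsilon>"
    using suminf_exist_split[OF eps sc] by blast
  define N where "N = max N0 (Suc m)"
  have mN: "m < N" and N0N: "N0 \<le> N" unfolding N_def by auto
  define P where "P \<beta> = (\<Sum>n<N. c n * exp (\<i> * of_real \<beta> * of_real (lam n)))" for \<beta> :: real
  have Pb: "norm (P \<beta>) \<le> E + C / \<beta> + \<epsilon>" if b1: "\<beta> \<ge> 1" for \<beta>
  proof -
    define f where "f n = c n * exp (\<i> * of_real \<beta> * of_real (lam n))" for n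
    have nf: "norm (f n) = norm (c n)" for n unfolding f_def by (simp add: norm_mult norm_expi)
    have sf: "summable (\<lambda>n. norm (f n))" using sc nf by simp
    have sf': "summable f" using summable_norm_cancel[OF sf] .
    have split: "suminf f = (\<Sum>i. f (i + N)) + sum f {..<N}" using suminf_split_initial_segment[OF sf'] .
    have st: "summable (\<lambda>i. norm (f (i + N)))" using summable_ignore_initial_segment[OF sf] .
    have "norm (\<Sum>i. f (i + N)) \<le> (\<Sum>i. norm (f (i + N)))" by (rule summable_norm[OF st])
    also have "\<dots> = (\<Sum>i. norm (c (i + N)))" using nf by simp
    also have "\<dots> < \<epsilon>"
    proof -
      have "norm (\<Sum>i. norm (c (i + N))) < \<epsilon>" using N0 N0N by blast
      thus ?thesis by simp
    qed
    finally have tl: "norm (\<Sum>i. f (i + N)) < \<epsilon>" .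
    have "P \<beta> = suminf f - (\<Sum>i. f (i + N))" unfolding P_def using split f_def by simp
    hence "norm (P \<beta>) \<le> norm (suminf f) + norm (\<Sum>i. f (i + N))" by (simp add: norm_triangle_ineq4)
    moreover have "norm (suminf f) \<le> E + C / \<beta>" using bnd b1 unfolding f_def by blast
    ultimately show ?thesis using tl by linarith
  qed
  define J where "J n T = (if n = m then complex_of_real T else
       (exp (\<i> * of_real (2*T) * of_real (lam n - lam m)) - exp (\<i> * of_real T * of_real (lam n - lam m))) / (\<i> * of_real (lam n - lam m)))" for n and T :: real
  define g where "g \<beta> = (\<Sum>n<N. c n * exp (\<i> * of_real \<beta> * of_real (lam n - lam m)))" for \<beta> :: real
  have gP: "norm (g \<beta>) = norm (P \<beta>)" for \<beta>
  proof -
    have "g \<beta> = P \<beta> * exp (\<i> * of_real \<beta> * of_real (- lam m))"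
      unfolding g_def P_def sum_distrib_right
    proof (rule sum.cong[OF refl])
      fix n
      have "exp (\<i> * of_real \<beta> * of_real (lam n - lam m))
          = exp (\<i> * of_real \<beta> * of_real (lam n) + \<i> * of_real \<beta> * of_real (- lam m))"
        by (simp add: algebra_simps)
      also have "\<dots> = exp (\<i> * of_real \<beta> * of_real (lam n)) * exp (\<i> * of_real \<beta> * of_real (- lam m))"
        by (rule exp_add)
      finally have eq: "exp (\<i> * of_real \<beta> * of_real (lam n - lam m)) = exp (\<i> * of_real \<beta> * of_real (lam n)) * exp (\<i> * of_real \<beta> * of_real (- lam m))" .
      show "c n * exp (\<i> * of_real \<beta> * of_real (lam n - lam m))
          = c n * exp (\<i> * of_real \<beta> * of_real (lam n)) * exp (\<i> * of_real \<beta> * of_real (- lam m))"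
        unfolding eq by (rule mult.assoc[symmetric])
    qed
    thus ?thesis by (simp add: norm_mult norm_expi)
  qed
  have gint: "(g has_integral (\<Sum>n<N. c n * J n T)) {T..2*T}" if T: "T \<ge> 0" for T
    unfolding g_def
  proof (rule has_integral_sum[OF finite_lessThan, where f="\<lambda>n \<beta>. c n * exp (\<i> * of_real \<beta> * of_real (lam n - lam m))"])
    fix n assume "n \<in> {..<N}"
    have "((\<lambda>\<beta>. exp (\<i> * of_real \<beta> * of_real (lam n - lam m))) has_integral J n T) {T..2*T}"
    proof (cases "n = m")
      case True
      have "((\<lambda>\<beta>. 1::complex) has_integral (Henstock_Kurzweil_Integration.content (cbox T (2*T)) *\<^sub>R 1)) (cbox T (2*T))"
        by (rule has_integral_const)
      moreover have "Henstock_Kurzweil_Integration.content (cbox T (2*T)) = T" using T by simp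
      ultimately show ?thesis using True unfolding J_def by (simp add: scaleR_conv_of_real)
    next
      case False
      hence "lam n - lam m \<noteq> 0" using inj by (simp add: inj_eq)
      from J_int[OF this T] show ?thesis using False unfolding J_def by simp
    qed
    thus "((\<lambda>\<beta>. c n * exp (\<i> * of_real \<beta> * of_real (lam n - lam m))) has_integral c n * J n T) {T..2*T}"
      by (rule has_integral_mult_right)
  qed
  define K where "K = (\<Sum>n\<in>{..<N} - {m}. norm (c n) * (2 / \<bar>lam n - lam m\<bar>))"
  have K0: "K \<ge> 0" unfolding K_def by (intro sum_nonneg) simp
  have key: "T * norm (c m) \<le> (E + \<epsilon>) * T + C + K" if T1: "T \<ge> 1" for T
  proof -
    have T0: "T \<ge> 0" using T1 by simp
    have "norm (\<Sum>n<N. c n * J n T) \<le> (E + C / T + \<epsilon>) * Henstock_Kurzweil_Integration.content (cbox T (2*T))"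
    proof (rule has_integral_bound[where f=g])
      show "0 \<le> E + C / T + \<epsilon>" using E0 C0 eps T0 by simp
      show "(g has_integral (\<Sum>n<N. c n * J n T)) (cbox T (2*T))" using gint[OF T0] by simp
      fix x assume "x \<in> cbox T (2*T)"
      hence "x \<ge> T" by simp
      hence "C / x \<le> C / T" using C0 T1 by (simp add: divide_left_mono)
      moreover have "x \<ge> 1" using \<open>x \<ge> T\<close> T1 by simp
      ultimately show "norm (g x) \<le> E + C / T + \<epsilon>" using Pb[of x] gP[of x] by simp
    qed
    also have "Henstock_Kurzweil_Integration.content (cbox T (2*T)) = T" using T0 by simp
    finally have I: "norm (\<Sum>n<N. c n * J n T) \<le> (E + C / T + \<epsilon>) * T" .
    have rm: "(\<Sum>n<N. c n * J n T) = c m * J m T + (\<Sum>n\<in>{..<N} - {m}. c n * J n T)"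
      using mN by (simp add: sum.remove)
    have Jm: "J m T = of_real T" unfolding J_def by simp
    have "norm (\<Sum>n\<in>{..<N} - {m}. c n * J n T) \<le> (\<Sum>n\<in>{..<N} - {m}. norm (c n * J n T))"
      by (rule norm_sum)
    also have "\<dots> \<le> K" unfolding K_def
    proof (rule sum_mono)
      fix n assume n: "n \<in> {..<N} - {m}"
      hence nm: "n \<noteq> m" by simp
      hence "lam n - lam m \<noteq> 0" using inj by (simp add: inj_eq)
      from J_bound[OF this, of T] have "norm (J n T) \<le> 2 / \<bar>lam n - lam m\<bar>" unfolding J_def using nm by simp
      hence "norm (c n) * norm (J n T) \<le> norm (c n) * (2 / \<bar>lam n - lam m\<bar>)"
        by (rule mult_left_mono) simp
      thus "norm (c n * J n T) \<le> norm (c n) * (2 / \<bar>lam n - lam m\<bar>)"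
        by (simp only: norm_mult)
    qed
    finally have R: "norm (\<Sum>n\<in>{..<N} - {m}. c n * J n T) \<le> K" .
    have "T * norm (c m) = norm (c m * J m T)" unfolding Jm using T0 by (simp add: norm_mult)
    also have "c m * J m T = (\<Sum>n<N. c n * J n T) - (\<Sum>n\<in>{..<N} - {m}. c n * J n T)" using rm by simp
    also have "norm \<dots> \<le> norm (\<Sum>n<N. c n * J n T) + norm (\<Sum>n\<in>{..<N} - {m}. c n * J n T)"
      by (rule norm_triangle_ineq4)
    also have "\<dots> \<le> (E + C / T + \<epsilon>) * T + K" using I R by simp
    also have "(E + C / T + \<epsilon>) * T = (E + \<epsilon>) * T + C" using T1 by (simp add: field_simps)
    finally show ?thesis by simp
  qed
  define T where "T = max 1 ((C + K) / \<epsilon> + 1)"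
  have T1: "T \<ge> 1" unfolding T_def by simp
  have "(C + K) / \<epsilon> < T" unfolding T_def by simp
  hence CK: "C + K < \<epsilon> * T" using eps by (simp add: field_simps)
  have "T * norm (c m) < (E + 2 * \<epsilon>) * T" using key[OF T1] CK by (simp add: algebra_simps)
  hence "norm (c m) < E + 2 * \<epsilon>" using T1 by (simp add: mult.commute)
  hence "3 * norm (c m) < 3 * E + 2 * (norm (c m) - E)" unfolding \<epsilon>_def by (simp add: field_simps)
  thus False using gt by (simp add: algebra_simps)
qed


lemma lin5: "S \<le> Z \<Longrightarrow> Z = Y + X3 \<Longrightarrow> Y \<le> W \<Longrightarrow> W = X1 + X2 \<Longrightarrow> X2 \<le> X4
   \<Longrightarrow> X3 < e/4 \<Longrightarrow> X1 < e/4 \<Longrightarrow> X4 < e/4 \<Longrightarrow> e > 0 \<Longrightarrow> S < (e::real)" by linarith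

lemma amgm:
  fixes A bb x l :: real
  assumes A0: "A \<ge> 0" and Az: "A = 0 \<longrightarrow> bb = 0" and l: "l > 0" and x: "x \<ge> 0"
  shows "\<bar>bb\<bar> * x \<le> (l * (bb^2 / A) + A * x^2 / l) / 2"
proof (cases "A = 0")
  case True thus ?thesis using Az by simp
next
  case False
  hence Ap: "A > 0" using A0 by simp
  have sq: "0 \<le> (l * \<bar>bb\<bar> - A * x)^2" by simp
  have "2 * l * A * (\<bar>bb\<bar> * x) \<le> l^2 * bb^2 + A^2 * x^2"
    using sq by (simp add: power2_eq_square algebra_simps)
  hence "\<bar>bb\<bar> * x \<le> (l^2 * bb^2 + A^2 * x^2) / (2 * l * A)"
    using Ap l by (simp add: field_simps)
  also have "(l^2 * bb^2 + A^2 * x^2) / (2 * l * A) = (l * (bb^2 / A) + A * x^2 / l) / 2"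
    using Ap l by (simp add: field_simps power2_eq_square)
  finally show ?thesis .
qed

lemma tail:
  fixes bb A :: "nat \<Rightarrow> real" and w :: "nat \<Rightarrow> nat \<Rightarrow> complex" and u :: "nat \<Rightarrow> complex" and M :: real
  assumes BB: "summable (\<lambda>n. bb n ^ 2 / A n)" and A0: "\<forall>n. A n \<ge> 0" and Az: "\<forall>n. A n = 0 \<longrightarrow> bb n = 0"
    and Qs: "\<forall>k. summable (\<lambda>n. A n * (cmod (w k n))^2)" and QM: "\<forall>k. (\<Sum>n. A n * (cmod (w k n))^2) \<le> M"
    and pt: "\<forall>n. (\<lambda>k. of_real (bb n) * w k n) \<longlonglongrightarrow> 0"
    and u: "\<forall>n. norm (u n) \<le> 1"
  shows "(\<lambda>k. \<Sum>n. of_real (bb n) * w k n * u n) \<longlonglongrightarrow> 0"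
proof -
  define B where "B n = bb n ^ 2 / A n" for n
  define Q where "Q k n = A n * (cmod (w k n))^2" for k n
  define e where "e k n = \<bar>bb n\<bar> * cmod (w k n)" for k n
  have B0: "B n \<ge> 0" for n unfolding B_def using A0 by simp
  have Q0: "Q k n \<ge> 0" for k n unfolding Q_def using A0 by simp
  have e0: "e k n \<ge> 0" for k n unfolding e_def by simp
  have am: "e k n \<le> (l * B n + Q k n / l) / 2" if l: "l > 0" for k n l
    unfolding e_def B_def Q_def using amgm[OF _ _ l, of "A n" "bb n" "cmod (w k n)"] A0 Az by simp
  have sB: "summable B" using BB unfolding B_def .
  have sQ: "summable (Q k)" for k using Qs unfolding Q_def by simp
  have se: "summable (e k)" for k
  proof (rule summable_comparison_test[of _ "\<lambda>n. (1 * B n + Q k n / 1) / 2"])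
    show "\<exists>N. \<forall>n\<ge>N. norm (e k n) \<le> (1 * B n + Q k n / 1) / 2" using am[of 1] e0 by simp
    show "summable (\<lambda>n. (1 * B n + Q k n / 1) / 2)" using sB sQ[of k] by (simp add: summable_add summable_divide)
  qed
  have nt: "norm (of_real (bb n) * w k n * u n) \<le> e k n" for k n
  proof -
    have "norm (of_real (bb n) * w k n * u n) = e k n * norm (u n)" unfolding e_def by (simp add: norm_mult)
    also have "\<dots> \<le> e k n * 1" using u e0 by (intro mult_left_mono) auto
    finally show ?thesis by simp
  qed
  have sn: "summable (\<lambda>n. norm (of_real (bb n) * w k n * u n))" for k
    by (rule summable_comparison_test[OF _ se[of k]]) (use nt in simp)
  show ?thesis unfolding LIMSEQ_iff
  proof (intro allI impI)
    fix \<epsilon> :: real assume eps: "\<epsilon> > 0"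
    define l where "l = 2 * (\<bar>M\<bar> + 1) / \<epsilon>"
    have l0: "l > 0" unfolding l_def using eps by simp
    have lM: "M / (2 * l) < \<epsilon> / 4"
    proof -
      have "M / (2 * l) = M * \<epsilon> / (4 * (\<bar>M\<bar> + 1))" unfolding l_def using eps by (simp add: field_simps)
      also have "\<dots> < \<epsilon> / 4"
      proof -
        have "M * \<epsilon> < (\<bar>M\<bar> + 1) * \<epsilon>" using eps by (intro mult_strict_right_mono) auto
        thus ?thesis by (simp add: field_simps)
      qed
      finally show ?thesis .
    qed
    have r0: "\<epsilon> / (2 * l) > 0" using eps l0 by simp
    obtain N where N: "\<forall>n\<ge>N. norm (\<Sum>i. B (i + n)) < \<epsilon> / (2 * l)"
      using suminf_exist_split[OF r0 sB] by blast
    have tB: "l / 2 * (\<Sum>i. B (i + N)) < \<epsilon> / 4"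
    proof -
      have "(\<Sum>i. B (i + N)) < \<epsilon> / (2 * l)" using N by auto
      hence "l / 2 * (\<Sum>i. B (i + N)) < l / 2 * (\<epsilon> / (2 * l))" using l0 by (intro mult_strict_left_mono) auto
      also have "\<dots> = \<epsilon> / 4" using l0 by (simp add: field_simps)
      finally show ?thesis .
    qed
    have fin: "(\<lambda>k. \<Sum>n<N. e k n) \<longlonglongrightarrow> 0"
    proof -
      have "(\<lambda>k. \<Sum>n<N. e k n) \<longlonglongrightarrow> (\<Sum>n<N. 0)"
      proof (rule tendsto_sum)
        fix n
        have "(\<lambda>k. norm (of_real (bb n) * w k n)) \<longlonglongrightarrow> 0" using pt tendsto_norm_zero by blast
        thus "(\<lambda>k. e k n) \<longlonglongrightarrow> 0" unfolding e_def by (simp add: norm_mult)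
      qed
      thus ?thesis by simp
    qed
    obtain K where K: "\<forall>k\<ge>K. norm (\<Sum>n<N. e k n) < \<epsilon> / 4"
      using fin eps unfolding LIMSEQ_iff by (metis diff_zero divide_pos_pos zero_less_numeral)
    show "\<exists>no. \<forall>k\<ge>no. norm ((\<Sum>n. of_real (bb n) * w k n * u n) - 0) < \<epsilon>"
    proof (intro exI allI impI)
      fix k assume kK: "k \<ge> K"
      have h1: "norm (\<Sum>n. of_real (bb n) * w k n * u n) \<le> (\<Sum>n. e k n)"
        using summable_norm[OF sn[of k]] suminf_le[OF nt sn[of k] se[of k]] by linarith
      have h2: "(\<Sum>n. e k n) = (\<Sum>i. e k (i + N)) + (\<Sum>n<N. e k n)" by (rule suminf_split_initial_segment[OF se])
      have s1: "summable (\<lambda>i. B (i + N))" using summable_ignore_initial_segment[OF sB] .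
      have s2: "summable (\<lambda>i. Q k (i + N))" using summable_ignore_initial_segment[OF sQ[of k]] .
      have h3: "(\<Sum>i. e k (i + N)) \<le> (\<Sum>i. l / 2 * B (i + N) + Q k (i + N) / (2 * l))"
      proof (rule suminf_le)
        show "\<And>i. e k (i + N) \<le> l / 2 * B (i + N) + Q k (i + N) / (2 * l)"
        proof -
          fix i
          have "e k (i + N) \<le> (l * B (i + N) + Q k (i + N) / l) / 2" using am[OF l0] by blast
          also have "\<dots> = l / 2 * B (i + N) + Q k (i + N) / (2 * l)" by (simp add: field_simps)
          finally show "e k (i + N) \<le> l / 2 * B (i + N) + Q k (i + N) / (2 * l)" .
        qed
        show "summable (\<lambda>i. e k (i + N))" using summable_ignore_initial_segment[OF se] .
        show "summable (\<lambda>i. l / 2 * B (i + N) + Q k (i + N) / (2 * l))"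
          using s1 s2 by (intro summable_add summable_mult summable_divide) auto
      qed
      have h4: "(\<Sum>i. l / 2 * B (i + N) + Q k (i + N) / (2 * l)) = l / 2 * (\<Sum>i. B (i + N)) + (\<Sum>i. Q k (i + N)) / (2 * l)"
      proof -
        have "(\<Sum>i. l / 2 * B (i + N) + Q k (i + N) / (2 * l)) = (\<Sum>i. l / 2 * B (i + N)) + (\<Sum>i. Q k (i + N) / (2 * l))"
          by (rule suminf_add[symmetric]) (use s1 s2 in \<open>auto intro: summable_mult summable_divide\<close>)
        also have "(\<Sum>i. l / 2 * B (i + N)) = l / 2 * (\<Sum>i. B (i + N))" by (rule suminf_mult[OF s1])
        also have "(\<Sum>i. Q k (i + N) / (2 * l)) = (\<Sum>i. Q k (i + N)) / (2 * l)" by (rule suminf_divide[OF s2])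
        finally show ?thesis .
      qed
      have h5: "(\<Sum>i. Q k (i + N)) \<le> M"
      proof -
        have "(\<Sum>n. Q k n) = (\<Sum>i. Q k (i + N)) + (\<Sum>n<N. Q k n)" by (rule suminf_split_initial_segment[OF sQ])
        moreover have "(\<Sum>n<N. Q k n) \<ge> 0" using Q0 by (simp add: sum_nonneg)
        moreover have "(\<Sum>n. Q k n) \<le> M" using QM unfolding Q_def by simp
        ultimately show ?thesis by linarith
      qed
      hence h6: "(\<Sum>i. Q k (i + N)) / (2 * l) \<le> M / (2 * l)" using l0 by (simp add: divide_right_mono)
      have "norm (\<Sum>n<N. e k n) < \<epsilon> / 4" using K kK by blast
      hence h7: "(\<Sum>n<N. e k n) < \<epsilon> / 4" by simp
      have "norm (\<Sum>n. of_real (bb n) * w k n * u n) < \<epsilon>"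
        by (rule lin5[OF h1 h2 h3 h4 h6 h7 tB lM eps])
      thus "norm ((\<Sum>n. of_real (bb n) * w k n * u n) - 0) < \<epsilon>" by simp
    qed
  qed
qed



lemma norm_nat_powr: "norm (of_nat (Suc n) powr z) = real (Suc n) powr Re z"
  using norm_powr_real_powr[of "of_nat (Suc n)" z] by simp

lemma nat_powr_expi: "(of_nat (Suc n) :: complex) powr (\<i> * of_real \<beta>) = exp (\<i> * of_real \<beta> * of_real (ln (real (Suc n))))"
proof -
  have "(of_nat (Suc n) :: complex) powr (\<i> * of_real \<beta>) = exp (\<i> * of_real \<beta> * ln (of_nat (Suc n)))"
    unfolding powr_def by (simp del: of_nat_Suc)
  also have "ln (of_nat (Suc n) :: complex) = of_real (ln (real (Suc n)))"
    using Ln_of_nat[of "Suc n"] by simp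
  finally show ?thesis .
qed

lemma cnj_nat_powr: "cnj ((of_nat (Suc n) :: complex) powr z) = of_nat (Suc n) powr (cnj z)"
  by (subst cnj_powr) simp_all

lemma ker_summable:
  assumes a_nonneg: "\<forall>n\<ge>1. a n \<ge> 0"
    and kernel_conv: "\<forall>x>2*\<rho>. summable (\<lambda>n. a (Suc n) * real (Suc n) powr (- x))"
    and s: "s \<in> halfplane \<rho>" and t: "t \<in> halfplane \<rho>"
  shows "summable (\<lambda>n. complex_of_real (a (Suc n)) * of_nat (Suc n) powr (- s - cnj t))"
proof -
  have x: "Re s + Re t > 2 * \<rho>" using s t unfolding halfplane_def by simp
  have k: "summable (\<lambda>n. a (Suc n) * real (Suc n) powr (- (Re s + Re t)))" using kernel_conv x by blast
  have eq: "(\<lambda>n. norm (complex_of_real (a (Suc n)) * of_nat (Suc n) powr (- s - cnj t)))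
      = (\<lambda>n. a (Suc n) * real (Suc n) powr (- (Re s + Re t)))"
  proof
    fix n
    have an: "a (Suc n) \<ge> 0" using a_nonneg by simp
    have "Re (- s - cnj t) = - (Re s + Re t)" by simp
    thus "norm (complex_of_real (a (Suc n)) * of_nat (Suc n) powr (- s - cnj t))
      = a (Suc n) * real (Suc n) powr (- (Re s + Re t))"
      unfolding norm_mult norm_nat_powr using an by simp
  qed
  have "summable (\<lambda>n. norm (complex_of_real (a (Suc n)) * of_nat (Suc n) powr (- s - cnj t)))"
    unfolding eq by (rule k)
  thus ?thesis by (rule summable_norm_cancel)
qed


context rk
begin

lemma conv_const: "conv (\<lambda>k. x) x"
  unfolding conv_def hnorm_def using ip_zero_l zero_in by simp

lemma ip_f_V:
  assumes f_conv: "\<forall>\<beta>::real. \<forall>s\<in>halfplane \<rho>. summable (\<lambda>n. of_nat (Suc n) powr (\<i> * of_real \<beta>)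
                    * complex_of_real (b (Suc n)) * of_nat (Suc n) powr (- s))"
    and fH: "fbeta b \<rho> \<beta> \<in> H" and S: "finite S" "S \<subseteq> halfplane \<rho>"
  shows "ip (fbeta b \<rho> \<beta>) (\<lambda>s. \<Sum>t\<in>S. c t * Kf a \<rho> t s)
     = (\<Sum>n. (of_real (b (Suc n)) * (\<Sum>t\<in>S. cnj (c t) * of_nat (Suc n) powr (- t))) * of_nat (Suc n) powr (\<i> * of_real \<beta>))"
proof -
  have KS: "\<forall>t\<in>S. Kf a \<rho> t \<in> H" using S K_in by blast
  define X where "X t n = of_nat (Suc n) powr (\<i> * of_real \<beta>) * complex_of_real (b (Suc n)) * of_nat (Suc n) powr (- t)" for t n
  have sX: "summable (X t)" if "t \<in> S" for t using f_conv S that unfolding X_def by blast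
  have ft: "fbeta b \<rho> \<beta> t = suminf (X t)" if "t \<in> S" for t using S that unfolding fbeta_def X_def by auto
  have "ip (fbeta b \<rho> \<beta>) (\<lambda>s. \<Sum>t\<in>S. c t * Kf a \<rho> t s) = (\<Sum>t\<in>S. cnj (c t) * ip (fbeta b \<rho> \<beta>) (Kf a \<rho> t))"
    by (rule ip_sum_r[OF S(1) KS fH])
  also have "\<dots> = (\<Sum>t\<in>S. cnj (c t) * suminf (X t))"
  proof (rule sum.cong[OF refl])
    fix t assume t: "t \<in> S"
    have th: "t \<in> halfplane \<rho>" using S t by blast
    show "cnj (c t) * ip (fbeta b \<rho> \<beta>) (Kf a \<rho> t) = cnj (c t) * suminf (X t)"
      using repr[OF th fH] ft[OF t] by simp
  qed
  also have "\<dots> = (\<Sum>t\<in>S. \<Sum>n. cnj (c t) * X t n)"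
    by (rule sum.cong[OF refl], rule suminf_mult[symmetric], rule sX)
  also have "\<dots> = (\<Sum>n. \<Sum>t\<in>S. cnj (c t) * X t n)"
    by (rule suminf_sum[symmetric], rule summable_mult, rule sX)
  also have "\<dots> = (\<Sum>n. (of_real (b (Suc n)) * (\<Sum>t\<in>S. cnj (c t) * of_nat (Suc n) powr (- t))) * of_nat (Suc n) powr (\<i> * of_real \<beta>))"
    unfolding X_def by (intro suminf_cong) (simp add: sum_distrib_left sum_distrib_right mult_ac)
  finally show ?thesis .
qed

lemma ip_V_V:
  assumes a_nonneg: "\<forall>n\<ge>1. a n \<ge> 0"
    and kernel_conv: "\<forall>x>2*\<rho>. summable (\<lambda>n. a (Suc n) * real (Suc n) powr (- x))"
    and S: "finite S" "S \<subseteq> halfplane \<rho>"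
  shows "summable (\<lambda>n. a (Suc n) * (cmod (\<Sum>t\<in>S. cnj (c t) * of_nat (Suc n) powr (- t)))^2)
    \<and> ip (\<lambda>s. \<Sum>t\<in>S. c t * Kf a \<rho> t s) (\<lambda>s. \<Sum>t\<in>S. c t * Kf a \<rho> t s)
       = of_real (\<Sum>n. a (Suc n) * (cmod (\<Sum>t\<in>S. cnj (c t) * of_nat (Suc n) powr (- t)))^2)"
proof -
  define v where "v = (\<lambda>s. \<Sum>t\<in>S. c t * Kf a \<rho> t s)"
  define wc where "wc n = (\<Sum>t\<in>S. cnj (c t) * of_nat (Suc n) powr (- t))" for n
  have KS: "\<forall>t\<in>S. Kf a \<rho> t \<in> H" using S K_in by blast
  have vH: "v \<in> H" unfolding v_def by (rule sum_in[OF S(1) KS])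
  define Y where "Y t t' n = complex_of_real (a (Suc n)) * of_nat (Suc n) powr (- t - cnj t')" for t t' n
  have sY: "summable (Y t t')" if "t \<in> S" "t' \<in> S" for t t'
    unfolding Y_def using ker_summable[OF a_nonneg kernel_conv] S that by blast
  define Z where "Z t n = complex_of_real (a (Suc n)) * of_nat (Suc n) powr (- t) * cnj (wc n)" for t n
  have cw: "cnj (wc n) = (\<Sum>t'\<in>S. c t' * of_nat (Suc n) powr (- cnj t'))" for n
    unfolding wc_def by (simp add: cnj_nat_powr del: of_nat_Suc)
  have YZ: "(\<Sum>t'\<in>S. c t' * Y t t' n) = Z t n" for t n
  proof -
    have pa: "(of_nat (Suc n) :: complex) powr (- t - cnj t') = of_nat (Suc n) powr (- t) * of_nat (Suc n) powr (- cnj t')" for t'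
    proof -
      have "- t - cnj t' = - t + (- cnj t')" by simp
      thus ?thesis by (simp only: powr_add)
    qed
    show ?thesis unfolding Y_def Z_def cw pa by (simp add: sum_distrib_left mult_ac)
  qed
  have vt: "v t = suminf (Z t)" if t: "t \<in> S" for t
  proof -
    have th: "t \<in> halfplane \<rho>" using S t by blast
    have "v t = (\<Sum>t'\<in>S. c t' * suminf (Y t t'))"
      unfolding v_def Kf_def dkernel_def Y_def using th by simp
    also have "\<dots> = (\<Sum>t'\<in>S. \<Sum>n. c t' * Y t t' n)"
      by (rule sum.cong[OF refl], rule suminf_mult[symmetric], rule sY[OF t]) 
    also have "\<dots> = (\<Sum>n. \<Sum>t'\<in>S. c t' * Y t t' n)"
      by (rule suminf_sum[symmetric], rule summable_mult, rule sY[OF t])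
    also have "\<dots> = suminf (Z t)" unfolding YZ ..
    finally show ?thesis .
  qed
  have sZ: "summable (Z t)" if t: "t \<in> S" for t
  proof -
    have "summable (\<lambda>n. \<Sum>t'\<in>S. c t' * Y t t' n)" by (rule summable_sum, rule summable_mult, rule sY[OF t])
    thus ?thesis unfolding YZ .
  qed
  have "ip v v = (\<Sum>t\<in>S. cnj (c t) * ip v (Kf a \<rho> t))" unfolding v_def[symmetric]
    by (subst (2) v_def) (rule ip_sum_r[OF S(1) KS vH])
  also have "\<dots> = (\<Sum>t\<in>S. cnj (c t) * suminf (Z t))"
  proof (rule sum.cong[OF refl])
    fix t assume t: "t \<in> S"
    have th: "t \<in> halfplane \<rho>" using S t by blast
    show "cnj (c t) * ip v (Kf a \<rho> t) = cnj (c t) * suminf (Z t)" using repr[OF th vH] vt[OF t] by simp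
  qed
  also have "\<dots> = (\<Sum>t\<in>S. \<Sum>n. cnj (c t) * Z t n)"
    by (rule sum.cong[OF refl], rule suminf_mult[symmetric], rule sZ)
  also have "\<dots> = (\<Sum>n. \<Sum>t\<in>S. cnj (c t) * Z t n)"
    by (rule suminf_sum[symmetric], rule summable_mult, rule sZ)
  also have "(\<lambda>n. \<Sum>t\<in>S. cnj (c t) * Z t n) = (\<lambda>n. complex_of_real (a (Suc n) * (cmod (wc n))^2))"
  proof
    fix n
    have "(\<Sum>t\<in>S. cnj (c t) * Z t n) = complex_of_real (a (Suc n)) * (wc n * cnj (wc n))"
      unfolding Z_def wc_def by (simp add: sum_distrib_left sum_distrib_right mult_ac)
    thus "(\<Sum>t\<in>S. cnj (c t) * Z t n) = complex_of_real (a (Suc n) * (cmod (wc n))^2)"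
      unfolding complex_norm_square[symmetric] by simp
  qed
  finally have e: "ip v v = (\<Sum>n. complex_of_real (a (Suc n) * (cmod (wc n))^2))" .
  have "summable (\<lambda>n. \<Sum>t\<in>S. cnj (c t) * Z t n)" by (rule summable_sum, rule summable_mult, rule sZ)
  also have "(\<lambda>n. \<Sum>t\<in>S. cnj (c t) * Z t n) = (\<lambda>n. complex_of_real (a (Suc n) * (cmod (wc n))^2))"
    by fact
  finally have sc: "summable (\<lambda>n. a (Suc n) * (cmod (wc n))^2)" by (simp only: summable_complex_of_real)
  have "ip v v = of_real (\<Sum>n. a (Suc n) * (cmod (wc n))^2)" unfolding e by (rule suminf_of_real[OF sc, symmetric])
  thus ?thesis using sc unfolding v_def wc_def by simp
qed

end


lemma part2:
  fixes \<rho> :: real and a b :: "nat \<Rightarrow> real"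
    and H :: "(complex \<Rightarrow> complex) set"
    and ip :: "(complex \<Rightarrow> complex) \<Rightarrow> (complex \<Rightarrow> complex) \<Rightarrow> complex"
    and T :: "(complex \<Rightarrow> complex) \<Rightarrow> (complex \<Rightarrow> complex)"
  assumes a_nonneg: "\<forall>n\<ge>1. a n \<ge> 0"
    and kernel_conv: "\<forall>x>2*\<rho>. summable (\<lambda>n. a (Suc n) * real (Suc n) powr (- x))"
    and ch: "chilbert H ip" and rkh: "is_rkhs H ip \<rho> (dkernel a \<rho>)"
    and supp_eq: "supp b = supp a"
    and f_conv: "\<forall>\<beta>::real. \<forall>s\<in>halfplane \<rho>. summable (\<lambda>n. of_nat (Suc n) powr (\<i> * of_real \<beta>)
                    * complex_of_real (b (Suc n)) * of_nat (Suc n) powr (- s))"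
    and total: "total_in H ip (range (fbeta b \<rho>))"
    and T_lin: "linear_on (cspan (range (fbeta b \<rho>))) T"
    and T_f: "\<forall>\<beta>::real. T (fbeta b \<rho> \<beta>) = (\<lambda>s. \<i> * of_real \<beta> * fbeta b \<rho> \<beta> s)"
    and delta: "\<exists>\<delta>>0. summable (\<lambda>n. real (Suc n) powr (2 * \<delta>) * (b (Suc n))\<^sup>2 / a (Suc n))"
  shows "adj_domain H ip (cspan (range (fbeta b \<rho>))) T = {\<lambda>_. 0}"
proof -
  interpret R: rk H ip a \<rho> using ch rkh by (simp add: rk_def hs_def rk_axioms_def)
  let ?D = "cspan (range (fbeta b \<rho>))"
  have fH: "\<And>\<beta>. fbeta b \<rho> \<beta> \<in> H" using total unfolding total_in_def by blast
  have fD: "\<And>\<beta>. fbeta b \<rho> \<beta> \<in> ?D" by (rule cspan_base) simp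
  have DH: "f \<in> H" if f: "f \<in> ?D" for f
  proof -
    obtain B d where B: "finite B" and fd: "f = (\<lambda>s. \<Sum>\<beta>\<in>B. d \<beta> * fbeta b \<rho> \<beta> s)" using cspan_rep[OF f] by blast
    show ?thesis unfolding fd using R.sum_in[OF B] fH by blast
  qed
  have TDH: "T f \<in> H" if f: "f \<in> ?D" for f
  proof -
    obtain B d where B: "finite B" and fd: "f = (\<lambda>s. \<Sum>\<beta>\<in>B. d \<beta> * fbeta b \<rho> \<beta> s)" using cspan_rep[OF f] by blast
    have "T f = (\<lambda>s. \<Sum>\<beta>\<in>B. (d \<beta> * (\<i> * of_real \<beta>)) * fbeta b \<rho> \<beta> s)"
      using comb[OF T_lin T_f B, of d "\<lambda>\<beta>. \<beta>"] unfolding fd by simp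
    thus ?thesis using R.sum_in[OF B] fH by simp
  qed
  have A0: "\<forall>n. a (Suc n) \<ge> 0" using a_nonneg by simp
  have Az: "\<forall>n. a (Suc n) = 0 \<longrightarrow> b (Suc n) = 0"
  proof (intro allI impI)
    fix n assume "a (Suc n) = 0"
    hence "Suc n \<notin> supp a" unfolding supp_def by simp
    hence "Suc n \<notin> supp b" using supp_eq by simp
    thus "b (Suc n) = 0" unfolding supp_def by simp
  qed
  have BB: "summable (\<lambda>n. (b (Suc n))^2 / a (Suc n))"
  proof -
    obtain \<delta> where d0: "\<delta> > 0" and sd: "summable (\<lambda>n. real (Suc n) powr (2 * \<delta>) * (b (Suc n))\<^sup>2 / a (Suc n))"
      using delta by blast
    show ?thesis
    proof (rule summable_comparison_test[OF _ sd], intro exI allI impI)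
      fix n :: nat
      have x0: "(b (Suc n))^2 / a (Suc n) \<ge> 0" using A0 by simp
      have p1: "real (Suc n) powr (2 * \<delta>) \<ge> 1" using d0 by (intro ge_one_powr_ge_zero) auto
      have "(b (Suc n))^2 / a (Suc n) \<le> real (Suc n) powr (2 * \<delta>) * ((b (Suc n))^2 / a (Suc n))"
        using mult_right_mono[OF p1 x0] by simp
      thus "norm ((b (Suc n))^2 / a (Suc n)) \<le> real (Suc n) powr (2 * \<delta>) * (b (Suc n))\<^sup>2 / a (Suc n)"
        using x0 by simp
    qed
  qed
  show ?thesis
  proof (intro equalityI subsetI)
    fix g :: "complex \<Rightarrow> complex" assume "g \<in> {\<lambda>_. 0}"
    hence g0: "g = (\<lambda>_. 0)" by simp
    have "\<forall>f\<in>?D. ip (T f) g = ip f g" unfolding g0 using R.ip_zero_r TDH DH by simp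
    thus "g \<in> adj_domain H ip ?D T" unfolding adj_domain_def using R.zero_in g0 by blast
  next
    fix g :: "complex \<Rightarrow> complex" assume "g \<in> adj_domain H ip ?D T"
    then obtain h where gH: "g \<in> H" and hH: "h \<in> H" and adj: "\<forall>f\<in>?D. ip (T f) g = ip f h"
      unfolding adj_domain_def by blast
    define M0 where "M0 = R.nrm (fbeta b \<rho> 0)"
    have nf: "R.nrm (fbeta b \<rho> \<beta>) = M0" for \<beta>
    proof -
      have "fbeta b \<rho> \<beta> = tr \<beta> (fbeta b \<rho> 0)" using fb_tr[of \<beta> b \<rho> 0] by simp
      moreover have "ip (tr \<beta> (fbeta b \<rho> 0)) (tr \<beta> (fbeta b \<rho> 0)) = ip (fbeta b \<rho> 0) (fbeta b \<rho> 0)"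
        by (rule R.tr_iso[OF fH fH])
      ultimately show ?thesis unfolding M0_def hnorm_def by simp
    qed
    have M0: "M0 \<ge> 0" unfolding M0_def by (rule R.nrm_nonneg[OF fH])
    have Gb: "norm (ip (fbeta b \<rho> \<beta>) g) \<le> M0 * R.nrm h / \<beta>" if b1: "\<beta> \<ge> 1" for \<beta>
    proof -
      have "ip (T (fbeta b \<rho> \<beta>)) g = ip (fbeta b \<rho> \<beta>) h" using adj fD by blast
      moreover have "ip (T (fbeta b \<rho> \<beta>)) g = (\<i> * of_real \<beta>) * ip (fbeta b \<rho> \<beta>) g"
        using T_f R.ip_scale_l[OF fH gH] by simp
      ultimately have "\<beta> * norm (ip (fbeta b \<rho> \<beta>) g) = norm (ip (fbeta b \<rho> \<beta>) h)"
        using b1 by (metis norm_mult norm_ii norm_of_real mult_1 abs_of_nonneg order_trans zero_le_one)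
      also have "\<dots> \<le> M0 * R.nrm h" using R.cs[OF fH hH] nf by simp
      finally show ?thesis using b1 by (simp add: field_simps)
    qed
    have Vbound: "norm (of_real (b (Suc n)) * (\<Sum>t\<in>S. cnj (c t) * of_nat (Suc n) powr (- t)))
        \<le> M0 * R.nrm (\<lambda>s. (\<Sum>t\<in>S. c t * Kf a \<rho> t s) - g s)"
      if S: "finite S" "S \<subseteq> halfplane \<rho>" for S c n
    proof -
      define v where "v = (\<lambda>s. \<Sum>t\<in>S. c t * Kf a \<rho> t s)"
      define wc where "wc n = (\<Sum>t\<in>S. cnj (c t) * of_nat (Suc n) powr (- t))" for n
      define cv where "cv n = of_real (b (Suc n)) * wc n" for n
      have KS: "\<forall>t\<in>S. Kf a \<rho> t \<in> H" using S R.K_in by blast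
      have vH: "v \<in> H" unfolding v_def by (rule R.sum_in[OF S(1) KS])
      have VV: "summable (\<lambda>n. a (Suc n) * (cmod (wc n))^2)"
        using R.ip_V_V[OF a_nonneg kernel_conv S] unfolding wc_def by blast
      have sc: "summable (\<lambda>n. norm (cv n))"
      proof (rule summable_comparison_test[of _ "\<lambda>n. (1 * ((b (Suc n))^2 / a (Suc n)) + a (Suc n) * (cmod (wc n))^2 / 1) / 2"])
        show "\<exists>N. \<forall>n\<ge>N. norm (norm (cv n)) \<le> (1 * ((b (Suc n))^2 / a (Suc n)) + a (Suc n) * (cmod (wc n))^2 / 1) / 2"
          unfolding cv_def using amgm[of "a (Suc _)" "b (Suc _)" 1 "cmod (wc _)"] A0 Az by (simp add: norm_mult)
        show "summable (\<lambda>n. (1 * ((b (Suc n))^2 / a (Suc n)) + a (Suc n) * (cmod (wc n))^2 / 1) / 2)"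
          using BB VV by (intro summable_divide summable_add) auto
      qed
      have inj: "inj (\<lambda>n. ln (real (Suc n)))" by (rule injI) simp
      have "norm (cv n) \<le> M0 * R.nrm (\<lambda>s. v s - g s)"
      proof (rule mean[OF sc inj])
        show "0 \<le> M0 * R.nrm (\<lambda>s. v s - g s)" using M0 R.nrm_nonneg[OF R.diff_in[OF vH gH]] by simp
        show "0 \<le> M0 * R.nrm h" using M0 R.nrm_nonneg[OF hH] by simp
        show "\<forall>\<beta>\<ge>1. norm (\<Sum>n. cv n * exp (\<i> * of_real \<beta> * of_real (ln (real (Suc n)))))
              \<le> M0 * R.nrm (\<lambda>s. v s - g s) + M0 * R.nrm h / \<beta>"
        proof (intro allI impI)
          fix \<beta> :: real assume b1: "\<beta> \<ge> 1"
          have "(\<Sum>n. cv n * exp (\<i> * of_real \<beta> * of_real (ln (real (Suc n))))) = ip (fbeta b \<rho> \<beta>) v"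
            unfolding cv_def wc_def v_def R.ip_f_V[OF f_conv fH S] nat_powr_expi ..
          also have "\<dots> = ip (fbeta b \<rho> \<beta>) g + ip (fbeta b \<rho> \<beta>) (\<lambda>s. v s - g s)"
            using R.ip_diff_r[OF vH gH fH] by simp
          finally have e: "(\<Sum>n. cv n * exp (\<i> * of_real \<beta> * of_real (ln (real (Suc n))))) = ip (fbeta b \<rho> \<beta>) g + ip (fbeta b \<rho> \<beta>) (\<lambda>s. v s - g s)" .
          have "norm (ip (fbeta b \<rho> \<beta>) (\<lambda>s. v s - g s)) \<le> M0 * R.nrm (\<lambda>s. v s - g s)"
            using R.cs[OF fH R.diff_in[OF vH gH]] nf by simp
          thus "norm (\<Sum>n. cv n * exp (\<i> * of_real \<beta> * of_real (ln (real (Suc n)))))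
              \<le> M0 * R.nrm (\<lambda>s. v s - g s) + M0 * R.nrm h / \<beta>"
            unfolding e using Gb[OF b1] norm_triangle_ineq[of "ip (fbeta b \<rho> \<beta>) g" "ip (fbeta b \<rho> \<beta>) (\<lambda>s. v s - g s)"]
            by linarith
        qed
      qed
      thus ?thesis unfolding cv_def wc_def v_def .
    qed
    obtain X where XV: "\<forall>k. X k \<in> Vk a \<rho>" and cX: "R.conv X g" using R.Vk_dense[OF gH] by blast
    have XH: "\<forall>k. X k \<in> H" using XV R.Vk_sub by blast
    have "\<forall>k. \<exists>S. \<exists>c. finite S \<and> S \<subseteq> halfplane \<rho> \<and> X k = (\<lambda>s. \<Sum>t\<in>S. c t * Kf a \<rho> t s)"
      using XV unfolding Vk_def by blast
    then obtain SS where "\<forall>k. \<exists>c. finite (SS k) \<and> SS k \<subseteq> halfplane \<rho> \<and> X k = (\<lambda>s. \<Sum>t\<in>SS k. c t * Kf a \<rho> t s)"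
      by (rule choice[THEN exE]) blast
    then obtain cc where rep: "\<forall>k. finite (SS k) \<and> SS k \<subseteq> halfplane \<rho> \<and> X k = (\<lambda>s. \<Sum>t\<in>SS k. cc k t * Kf a \<rho> t s)"
      by (rule choice[THEN exE]) blast
    have SSf: "finite (SS k)" and SSh: "SS k \<subseteq> halfplane \<rho>" and Xk: "X k = (\<lambda>s. \<Sum>t\<in>SS k. cc k t * Kf a \<rho> t s)" for k
      using rep by auto
    define w where "w k n = (\<Sum>t\<in>SS k. cnj (cc k t) * of_nat (Suc n) powr (- t))" for k n
    have dX: "(\<lambda>k. R.nrm (\<lambda>s. X k s - g s)) \<longlonglongrightarrow> 0" using cX unfolding R.conv_def .
    have pt: "\<forall>n. (\<lambda>k. of_real (b (Suc n)) * w k n) \<longlonglongrightarrow> 0"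
    proof
      fix n
      have "(\<lambda>k. M0 * R.nrm (\<lambda>s. X k s - g s)) \<longlonglongrightarrow> M0 * 0" by (intro tendsto_intros dX)
      hence l0: "(\<lambda>k. M0 * R.nrm (\<lambda>s. X k s - g s)) \<longlonglongrightarrow> 0" by simp
      show "(\<lambda>k. of_real (b (Suc n)) * w k n) \<longlonglongrightarrow> 0"
      proof (rule Lim_null_comparison[OF _ l0], rule always_eventually, rule allI)
        fix k
        show "norm (of_real (b (Suc n)) * w k n) \<le> M0 * R.nrm (\<lambda>s. X k s - g s)"
          using Vbound[OF SSf[of k] SSh[of k], where c="cc k" and n=n] unfolding w_def Xk .
      qed
    qed
    obtain Kb where Kb: "\<forall>k. norm (R.nrm (\<lambda>s. X k s - g s)) \<le> Kb"
      using convergent_imp_Bseq[OF convergentI[OF dX]] unfolding Bseq_def by blast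
    have QM: "\<forall>k. (\<Sum>n. a (Suc n) * (cmod (w k n))^2) \<le> (Kb + R.nrm g)^2"
    proof
      fix k
      have VV: "summable (\<lambda>n. a (Suc n) * (cmod (w k n))^2) \<and> ip (X k) (X k) = of_real (\<Sum>n. a (Suc n) * (cmod (w k n))^2)"
        using R.ip_V_V[OF a_nonneg kernel_conv SSf[of k] SSh[of k], where c="cc k"] unfolding w_def Xk .
      hence "(\<Sum>n. a (Suc n) * (cmod (w k n))^2) = (R.nrm (X k))^2" using R.nrm_sq XH by simp
      also have "R.nrm (X k) \<le> Kb + R.nrm g"
      proof -
        have "R.nrm (\<lambda>s. X k s - 0) \<le> R.nrm (\<lambda>s. X k s - g s) + R.nrm (\<lambda>s. g s - 0)"
          using R.nrm_tri[OF _ gH R.zero_in] XH by blast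
        moreover have "R.nrm (\<lambda>s. X k s - g s) \<le> Kb" using Kb by (metis abs_le_D1 real_norm_def)
        ultimately show ?thesis by simp
      qed
      hence "(R.nrm (X k))^2 \<le> (Kb + R.nrm g)^2" using R.nrm_nonneg XH by (intro power_mono) auto
      finally show "(\<Sum>n. a (Suc n) * (cmod (w k n))^2) \<le> (Kb + R.nrm g)^2" .
    qed
    have Qs: "\<forall>k. summable (\<lambda>n. a (Suc n) * (cmod (w k n))^2)"
    proof
      fix k show "summable (\<lambda>n. a (Suc n) * (cmod (w k n))^2)"
        using R.ip_V_V[OF a_nonneg kernel_conv SSf[of k] SSh[of k], where c="cc k"] unfolding w_def by blast
    qed
    have Gz: "ip (fbeta b \<rho> \<beta>) g = 0" for \<beta>
    proof -
      have u: "\<forall>n. norm ((of_nat (Suc n) :: complex) powr (\<i> * of_real \<beta>)) \<le> 1"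
        unfolding norm_nat_powr by simp
      have l1: "(\<lambda>k. \<Sum>n. of_real (b (Suc n)) * w k n * of_nat (Suc n) powr (\<i> * of_real \<beta>)) \<longlonglongrightarrow> 0"
        by (rule tail[OF BB A0 Az Qs QM pt u])
      have "(\<lambda>k. \<Sum>n. of_real (b (Suc n)) * w k n * of_nat (Suc n) powr (\<i> * of_real \<beta>)) = (\<lambda>k. ip (fbeta b \<rho> \<beta>) (X k))"
      proof
        fix k show "(\<Sum>n. of_real (b (Suc n)) * w k n * of_nat (Suc n) powr (\<i> * of_real \<beta>)) = ip (fbeta b \<rho> \<beta>) (X k)"
          unfolding Xk w_def R.ip_f_V[OF f_conv fH SSf[of k] SSh[of k]] ..
      qed
      hence l1': "(\<lambda>k. ip (fbeta b \<rho> \<beta>) (X k)) \<longlonglongrightarrow> 0" using l1 by simp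
      have l2: "(\<lambda>k. ip (fbeta b \<rho> \<beta>) (X k)) \<longlonglongrightarrow> ip (fbeta b \<rho> \<beta>) g"
        by (rule R.conv_ip[OF _ XH fH gH R.conv_const cX]) (simp add: fH)
      show ?thesis using LIMSEQ_unique[OF l2 l1'] .
    qed
    have Dz: "ip d g = 0" if d: "d \<in> ?D" for d
    proof -
      obtain B dd where B: "finite B" and dd: "d = (\<lambda>s. \<Sum>\<beta>\<in>B. dd \<beta> * fbeta b \<rho> \<beta> s)" using cspan_rep[OF d] by blast
      have "ip d g = (\<Sum>\<beta>\<in>B. dd \<beta> * ip (fbeta b \<rho> \<beta>) g)" unfolding dd
        by (rule R.ip_sum_l[OF B _ gH]) (simp add: fH)
      thus ?thesis using Gz by simp
    qed
    have "\<forall>k. \<exists>d. d \<in> ?D \<and> R.nrm (\<lambda>s. g s - d s) < inverse (real (Suc k))"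
    proof
      fix k
      have tt: "\<forall>x\<in>H. \<forall>e>0. \<exists>d\<in>?D. R.nrm (\<lambda>s. x s - d s) < e" using total unfolding total_in_def by blast
      have "inverse (real (Suc k)) > 0" by simp
      then obtain d where "d \<in> ?D" "R.nrm (\<lambda>s. g s - d s) < inverse (real (Suc k))" using tt gH by blast
      thus "\<exists>d. d \<in> ?D \<and> R.nrm (\<lambda>s. g s - d s) < inverse (real (Suc k))" by blast
    qed
    then obtain Dk where Dk: "\<forall>k. Dk k \<in> ?D \<and> R.nrm (\<lambda>s. g s - Dk k s) < inverse (real (Suc k))"
      by (rule choice[THEN exE]) blast
    have DkH: "\<forall>k. Dk k \<in> H" using Dk DH by blast
    have cD: "R.conv Dk g" unfolding R.conv_def
    proof (rule Lim_null_comparison[OF _ LIMSEQ_inverse_real_of_nat], rule always_eventually, rule allI)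
      fix k
      have "R.nrm (\<lambda>s. Dk k s - g s) = R.nrm (\<lambda>s. g s - Dk k s)" using R.nrm_swap DkH gH by blast
      thus "norm (R.nrm (\<lambda>s. Dk k s - g s)) \<le> inverse (real (Suc k))"
        using Dk R.nrm_nonneg[OF R.diff_in[OF gH DkH[rule_format]]] by (simp add: less_imp_le)
    qed
    have l3: "(\<lambda>k. ip (Dk k) g) \<longlonglongrightarrow> ip g g"
      by (rule R.conv_ip[OF DkH _ gH gH cD R.conv_const]) (simp add: gH)
    have "(\<lambda>k. ip (Dk k) g) = (\<lambda>k. 0)" using Dz Dk by simp
    hence "ip g g = 0" using l3 LIMSEQ_unique[OF l3] by (metis tendsto_const)
    hence "g = (\<lambda>_. 0)" using R.ip_self_zero gH by blast
    thus "g \<in> {\<lambda>_. 0}" by simp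
  qed
qed


theorem lemma5p7:
  fixes \<rho> :: real and a b :: "nat \<Rightarrow> real"
    and H :: "(complex \<Rightarrow> complex) set"
    and ip :: "(complex \<Rightarrow> complex) \<Rightarrow> (complex \<Rightarrow> complex) \<Rightarrow> complex"
    and T :: "(complex \<Rightarrow> complex) \<Rightarrow> (complex \<Rightarrow> complex)"
  assumes a_nonneg: "\<forall>n\<ge>1. a n \<ge> 0"
    and kernel_conv: "\<forall>x>2*\<rho>. summable (\<lambda>n. a (Suc n) * real (Suc n) powr (- x))"
    and rkhs: "is_rkhs H ip \<rho> (dkernel a \<rho>)"
    and adm: "admissible b"
    and supp_eq: "supp b = supp a"
    and f_conv: "\<forall>\<beta>::real. \<forall>s\<in>halfplane \<rho>. summable (\<lambda>n. of_nat (Suc n) powr (\<i> * of_real \<beta>)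
                    * complex_of_real (b (Suc n)) * of_nat (Suc n) powr (- s))"
    and total: "total_in H ip (range (fbeta b \<rho>))"
    and T_lin: "linear_on (cspan (range (fbeta b \<rho>))) T"
    and T_f: "\<forall>\<beta>::real. T (fbeta b \<rho> \<beta>) = (\<lambda>s. \<i> * of_real \<beta> * fbeta b \<rho> \<beta> s)"
  shows "T_homogeneous H ip (cspan (range (fbeta b \<rho>))) T
    \<and> ((\<exists>\<delta>>0. summable (\<lambda>n. real (Suc n) powr (2 * \<delta>) * (b (Suc n))\<^sup>2 / a (Suc n)))
        \<longrightarrow> adj_domain H ip (cspan (range (fbeta b \<rho>))) T = {\<lambda>_. 0})"
  proof -
  have ch: "chilbert H ip" using rkhs unfolding is_rkhs_def by blast
  have P1: "T_homogeneous H ip (cspan (range (fbeta b \<rho>))) T" by (rule part1[OF ch rkhs T_lin T_f])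
  have P2: "(\<exists>\<delta>>0. summable (\<lambda>n. real (Suc n) powr (2 * \<delta>) * (b (Suc n))\<^sup>2 / a (Suc n)))
        \<longrightarrow> adj_domain H ip (cspan (range (fbeta b \<rho>))) T = {\<lambda>_. 0}"
    using part2[OF a_nonneg kernel_conv ch rkhs supp_eq f_conv total T_lin T_f] by blast
  show ?thesis using P1 P2 by blast
qed

end
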